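(* Let $k\in l_2(X)$ with $\check k\in L^\infty(G)$, $|\check k|=1$ a.e. on $G$, and suppose $W_k$ is invertible on $l_2(X_+)$. If $\psi\in H^\infty(G)$ satisfies $\|\check k-\overline\psi\|_{L^\infty(G)}<1$, then $\psi$ is invertible in $H^\infty(G)$.
   Context: $X$ is a discrete linearly ordered abelian group with positive cone $X_+$; $G$ is its compact dual group with normalized Haar measure. $\check k(x)=\sum_{\xi\in X}k(\xi)\xi(x)$; $W_kg=1_{X_+}(k\ast g)$ on $l_2(X_+)$. $H^\infty(G)=\{f\in L^\infty(G):\widehat f(\chi)=0\ \forall\chi\notin X_+\}$, where $\widehat f(\xi)=\int_Gf(x)\overline{\xi(x)}dx$. *)

theory Defs
  imports "HOL-Probability.Probability"
begin

text \<open>X is modelled by a type 'x of class linordered_ab_group_add (discrete topology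
is implicit).  The positive cone is X_+ = {xi. 0 <= xi}.\<close>

definition pos_cone :: "'x::linordered_ab_group_add set" where
  "pos_cone = {\<xi>. 0 \<le> \<xi>}"

text \<open>The dual group G: all characters of the discrete group X.  An element x of G is
a character, and the pairing is xi(x) = x xi.\<close>

definition dual_group :: "('x::linordered_ab_group_add \<Rightarrow> complex) set" where
  "dual_group = {\<gamma>. (\<forall>\<xi>. cmod (\<gamma> \<xi>) = 1) \<and> (\<forall>a b. \<gamma> (a + b) = \<gamma> a * \<gamma> b)}"

text \<open>Normalized Haar measure on G (sigma algebra generated by the evaluation maps,
i.e. the Baire sets of G; translation invariant probability measure).\<close>

definition haar :: "('x::linordered_ab_group_add \<Rightarrow> complex) measure \<Rightarrow> bool" where
  "haar \<mu> \<longleftrightarrow> prob_space \<mu> \<and> space \<mu> = dual_group \<and>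
     sets \<mu> = sigma_sets dual_group {{\<gamma> \<in> dual_group. \<gamma> \<xi> \<in> A} | \<xi> A. A \<in> sets borel} \<and>
     (\<forall>h \<in> dual_group. distr \<mu> \<mu> (\<lambda>\<gamma> \<xi>. h \<xi> * \<gamma> \<xi>) = \<mu>)"

definition ess_bounded :: "'a measure \<Rightarrow> ('a \<Rightarrow> complex) \<Rightarrow> bool" where
  "ess_bounded \<mu> f \<longleftrightarrow> f \<in> borel_measurable \<mu> \<and> (\<exists>C. AE x in \<mu>. cmod (f x) \<le> C)"

definition fourier :: "('x \<Rightarrow> complex) measure \<Rightarrow> (('x \<Rightarrow> complex) \<Rightarrow> complex) \<Rightarrow> 'x \<Rightarrow> complex" where
  "fourier \<mu> f \<xi> = (LINT x|\<mu>. f x * cnj (x \<xi>))"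

definition Hinf :: "('x::linordered_ab_group_add \<Rightarrow> complex) measure \<Rightarrow> (('x \<Rightarrow> complex) \<Rightarrow> complex) set" where
  "Hinf \<mu> = {f. ess_bounded \<mu> f \<and> (\<forall>\<gamma>. \<gamma> \<notin> pos_cone \<longrightarrow> fourier \<mu> f \<gamma> = 0)}"

definition l2 :: "'a set \<Rightarrow> ('a \<Rightarrow> complex) set" where
  "l2 A = {g. (\<forall>\<xi>. \<xi> \<notin> A \<longrightarrow> g \<xi> = 0) \<and> (\<lambda>\<xi>. (cmod (g \<xi>))\<^sup>2) summable_on UNIV}"

text \<open>f represents check k = sum_xi k(xi) xi(.), the (unconditional) sum converging in L2(G).\<close>

definition is_check :: "('x \<Rightarrow> complex) measure \<Rightarrow> ('x \<Rightarrow> complex) \<Rightarrow> (('x \<Rightarrow> complex) \<Rightarrow> complex) \<Rightarrow> bool" where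
  "is_check \<mu> k f \<longleftrightarrow> f \<in> borel_measurable \<mu> \<and>
     ((\<lambda>F. \<integral>\<^sup>+ x. ennreal ((cmod (f x - (\<Sum>\<xi>\<in>F. k \<xi> * x \<xi>)))\<^sup>2) \<partial>\<mu>) \<longlongrightarrow> 0)
       (finite_subsets_at_top UNIV)"

definition wiener_hopf :: "('x::linordered_ab_group_add \<Rightarrow> complex) \<Rightarrow> ('x \<Rightarrow> complex) \<Rightarrow> 'x \<Rightarrow> complex" where
  "wiener_hopf k g \<xi> = (if \<xi> \<in> pos_cone then (\<Sum>\<^sub>\<infinity>\<eta>\<in>pos_cone. k (\<xi> - \<eta>) * g \<eta>) else 0)"

end

theory Submission
  imports Defs
begin

section \<open>l2 infrastructure\<close>

definition isl2 :: "('a \<Rightarrow> complex) \<Rightarrow> bool" where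
  "isl2 x \<longleftrightarrow> (\<lambda>\<xi>. (cmod (x \<xi>))\<^sup>2) summable_on UNIV"

definition sqn :: "('a \<Rightarrow> complex) \<Rightarrow> real" where
  "sqn x = infsum (\<lambda>\<xi>. (cmod (x \<xi>))\<^sup>2) UNIV"

lemma sqn_nonneg: "0 \<le> sqn x"
  unfolding sqn_def by (rule infsum_nonneg) auto

lemma sum_le_sqn: "isl2 x \<Longrightarrow> finite F \<Longrightarrow> (\<Sum>\<xi>\<in>F. (cmod (x \<xi>))\<^sup>2) \<le> sqn x"
  unfolding isl2_def sqn_def by (rule finite_sum_le_infsum) auto

lemma bdd_isl2:
  assumes "\<And>F. finite F \<Longrightarrow> (\<Sum>\<xi>\<in>F. (cmod (x \<xi>))\<^sup>2) \<le> B"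
  shows "isl2 x \<and> sqn x \<le> B"
proof -
  have s: "isl2 x" unfolding isl2_def
    by (rule nonneg_bdd_above_summable_on) (use assms in \<open>auto intro!: bdd_aboveI2\<close>)
  moreover have "sqn x \<le> B" unfolding sqn_def
    using s assms unfolding isl2_def by (intro infsum_le_finite_sums) auto
  ultimately show ?thesis by auto
qed

lemma sqn_sq_le: "isl2 x \<Longrightarrow> (cmod (x \<xi>))\<^sup>2 \<le> sqn x"
  using sum_le_sqn[of x "{\<xi>}"] by auto

lemma sqn_le_cmod: "isl2 x \<Longrightarrow> cmod (x \<xi>) \<le> sqrt (sqn x)"
  using sqn_sq_le[of x \<xi>] real_le_rsqrt by blast

lemma L2_set_cmod: "L2_set (\<lambda>\<xi>. cmod (x \<xi>)) F = sqrt (\<Sum>\<xi>\<in>F. (cmod (x \<xi>))\<^sup>2)"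
  unfolding L2_set_def by simp

lemma isl2_add:
  assumes "isl2 x" "isl2 y"
  shows "isl2 (\<lambda>\<xi>. x \<xi> + y \<xi>) \<and> sqrt (sqn (\<lambda>\<xi>. x \<xi> + y \<xi>)) \<le> sqrt (sqn x) + sqrt (sqn y)"
proof -
  have "(\<Sum>\<xi>\<in>F. (cmod (x \<xi> + y \<xi>))\<^sup>2) \<le> (sqrt (sqn x) + sqrt (sqn y))\<^sup>2" if "finite F" for F
  proof -
    have "L2_set (\<lambda>\<xi>. cmod (x \<xi> + y \<xi>)) F \<le> L2_set (\<lambda>\<xi>. cmod (x \<xi>) + cmod (y \<xi>)) F"
      by (rule L2_set_mono) (auto simp: norm_triangle_ineq)
    also have "\<dots> \<le> L2_set (\<lambda>\<xi>. cmod (x \<xi>)) F + L2_set (\<lambda>\<xi>. cmod (y \<xi>)) F"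
      by (rule L2_set_triangle_ineq)
    also have "\<dots> \<le> sqrt (sqn x) + sqrt (sqn y)"
      unfolding L2_set_cmod using sum_le_sqn[OF assms(1) that] sum_le_sqn[OF assms(2) that]
      by (intro add_mono real_sqrt_le_mono) auto
    finally have "sqrt (\<Sum>\<xi>\<in>F. (cmod (x \<xi> + y \<xi>))\<^sup>2) \<le> sqrt (sqn x) + sqrt (sqn y)"
      unfolding L2_set_cmod .
    moreover have "0 \<le> sqrt (\<Sum>\<xi>\<in>F. (cmod (x \<xi> + y \<xi>))\<^sup>2)" by (simp add: sum_nonneg)
    ultimately have "(sqrt (\<Sum>\<xi>\<in>F. (cmod (x \<xi> + y \<xi>))\<^sup>2))\<^sup>2 \<le> (sqrt (sqn x) + sqrt (sqn y))\<^sup>2"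
      by (rule power_mono)
    then show ?thesis by (simp add: sum_nonneg)
  qed
  from bdd_isl2[OF this] have "isl2 (\<lambda>\<xi>. x \<xi> + y \<xi>)"
    and le: "sqn (\<lambda>\<xi>. x \<xi> + y \<xi>) \<le> (sqrt (sqn x) + sqrt (sqn y))\<^sup>2" by auto
  moreover have "sqrt (sqn (\<lambda>\<xi>. x \<xi> + y \<xi>)) \<le> sqrt (sqn x) + sqrt (sqn y)"
    using real_sqrt_le_mono[OF le] by (simp add: sqn_nonneg)
  ultimately show ?thesis by blast
qed

lemma isl2_scale:
  assumes "isl2 x"
  shows "isl2 (\<lambda>\<xi>. c * x \<xi>) \<and> sqn (\<lambda>\<xi>. c * x \<xi>) = (cmod c)\<^sup>2 * sqn x"
proof -
  have e: "(\<lambda>\<xi>. (cmod (c * x \<xi>))\<^sup>2) = (\<lambda>\<xi>. (cmod c)\<^sup>2 * (cmod (x \<xi>))\<^sup>2)"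
    by (auto simp: norm_mult power_mult_distrib)
  show ?thesis using assms unfolding isl2_def sqn_def e
    by (auto intro: summable_on_cmult_right infsum_cmult_right)
qed

lemma isl2_minus: "isl2 x \<Longrightarrow> isl2 (\<lambda>\<xi>. - x \<xi>) \<and> sqn (\<lambda>\<xi>. - x \<xi>) = sqn x"
  unfolding isl2_def sqn_def by simp

lemma isl2_diff:
  assumes "isl2 x" "isl2 y"
  shows "isl2 (\<lambda>\<xi>. x \<xi> - y \<xi>) \<and> sqrt (sqn (\<lambda>\<xi>. x \<xi> - y \<xi>)) \<le> sqrt (sqn x) + sqrt (sqn y)"
  using isl2_add[OF assms(1) isl2_minus[OF assms(2), THEN conjunct1]] isl2_minus[OF assms(2)]
  by simp

lemma isl2_CS:
  assumes "isl2 x" "isl2 y"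
  shows "((\<lambda>\<xi>. cmod (x \<xi> * y \<xi>)) summable_on UNIV) \<and>
         infsum (\<lambda>\<xi>. cmod (x \<xi> * y \<xi>)) UNIV \<le> sqrt (sqn x) * sqrt (sqn y)"
proof -
  have fin: "(\<Sum>\<xi>\<in>F. cmod (x \<xi> * y \<xi>)) \<le> sqrt (sqn x) * sqrt (sqn y)" if "finite F" for F
  proof -
    have "(\<Sum>\<xi>\<in>F. cmod (x \<xi> * y \<xi>)) = (\<Sum>\<xi>\<in>F. \<bar>cmod (x \<xi>)\<bar> * \<bar>cmod (y \<xi>)\<bar>)"
      by (simp add: norm_mult)
    also have "\<dots> \<le> L2_set (\<lambda>\<xi>. cmod (x \<xi>)) F * L2_set (\<lambda>\<xi>. cmod (y \<xi>)) F"
      by (rule L2_set_mult_ineq)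
    also have "\<dots> \<le> sqrt (sqn x) * sqrt (sqn y)"
      unfolding L2_set_cmod using sum_le_sqn[OF assms(1) that] sum_le_sqn[OF assms(2) that]
      by (intro mult_mono real_sqrt_le_mono) (auto simp: sqn_nonneg sum_nonneg)
    finally show ?thesis .
  qed
  have s: "(\<lambda>\<xi>. cmod (x \<xi> * y \<xi>)) summable_on UNIV"
    by (rule nonneg_bdd_above_summable_on) (use fin in \<open>auto intro!: bdd_aboveI2\<close>)
  then show ?thesis using fin by (auto intro!: infsum_le_finite_sums)
qed

lemma isl2_CS':
  assumes "isl2 x" "isl2 y"
  shows "((\<lambda>\<xi>. x \<xi> * y \<xi>) summable_on UNIV) \<and>
         cmod (infsum (\<lambda>\<xi>. x \<xi> * y \<xi>) UNIV) \<le> sqrt (sqn x) * sqrt (sqn y)"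
  using isl2_CS[OF assms] norm_infsum_bound[of "\<lambda>\<xi>. x \<xi> * y \<xi>" UNIV]
  by (auto intro: abs_summable_summable)

lemma isl2_tail:
  assumes "isl2 x" "e > 0"
  shows "\<exists>F. finite F \<and> isl2 (\<lambda>\<xi>. if \<xi> \<in> F then 0 else x \<xi>) \<and>
             sqn (\<lambda>\<xi>. if \<xi> \<in> F then 0 else x \<xi>) < e"
proof -
  have hs: "((\<lambda>\<xi>. (cmod (x \<xi>))\<^sup>2) has_sum sqn x) UNIV"
    using assms unfolding isl2_def sqn_def by (simp add: has_sum_infsum)
  then have "\<forall>\<^sub>F F in finite_subsets_at_top UNIV. dist (\<Sum>\<xi>\<in>F. (cmod (x \<xi>))\<^sup>2) (sqn x) < e/2"
    unfolding has_sum_def tendsto_iff using assms(2) by (meson half_gt_zero)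
  then obtain F where F: "finite F" "dist (\<Sum>\<xi>\<in>F. (cmod (x \<xi>))\<^sup>2) (sqn x) < e/2"
    unfolding eventually_finite_subsets_at_top by blast
  have "(\<Sum>\<xi>\<in>E. (cmod (if \<xi> \<in> F then 0 else x \<xi>))\<^sup>2) \<le> sqn x - (\<Sum>\<xi>\<in>F. (cmod (x \<xi>))\<^sup>2)"
    if "finite E" for E
  proof -
    have "(\<Sum>\<xi>\<in>E. (cmod (if \<xi> \<in> F then 0 else x \<xi>))\<^sup>2) = (\<Sum>\<xi>\<in>E - F. (cmod (x \<xi>))\<^sup>2)"
      by (rule sum.mono_neutral_cong_right) (use that in auto)
    also have "\<dots> = (\<Sum>\<xi>\<in>E \<union> F. (cmod (x \<xi>))\<^sup>2) - (\<Sum>\<xi>\<in>F. (cmod (x \<xi>))\<^sup>2)"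
      using sum.union_disjoint[of "E - F" F "\<lambda>\<xi>. (cmod (x \<xi>))\<^sup>2"] that F(1) by force
    also have "\<dots> \<le> sqn x - (\<Sum>\<xi>\<in>F. (cmod (x \<xi>))\<^sup>2)"
      using sum_le_sqn[OF assms(1), of "E \<union> F"] that F(1) by simp
    finally show ?thesis .
  qed
  then have "isl2 (\<lambda>\<xi>. if \<xi> \<in> F then 0 else x \<xi>) \<and>
     sqn (\<lambda>\<xi>. if \<xi> \<in> F then 0 else x \<xi>) \<le> sqn x - (\<Sum>\<xi>\<in>F. (cmod (x \<xi>))\<^sup>2)"
    by (rule bdd_isl2)
  moreover have "\<bar>(\<Sum>\<xi>\<in>F. (cmod (x \<xi>))\<^sup>2) - sqn x\<bar> < e/2"
    using F(2) by (simp add: dist_real_def)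
  then have "sqn x - (\<Sum>\<xi>\<in>F. (cmod (x \<xi>))\<^sup>2) < e"
    using assms(2) unfolding abs_less_iff by linarith
  ultimately show ?thesis using F(1) by (intro exI[of _ F]) auto
qed

lemma isl2_complete:
  fixes x :: "nat \<Rightarrow> 'a \<Rightarrow> complex"
  assumes l2: "\<And>n. isl2 (x n)"
    and cau: "\<And>e. e > 0 \<Longrightarrow> \<exists>N. \<forall>m\<ge>N. \<forall>n\<ge>N. sqn (\<lambda>\<xi>. x m \<xi> - x n \<xi>) < e"
  shows "\<exists>y. isl2 y \<and> (\<forall>e>0. \<exists>N. \<forall>n\<ge>N. isl2 (\<lambda>\<xi>. x n \<xi> - y \<xi>) \<and> sqn (\<lambda>\<xi>. x n \<xi> - y \<xi>) \<le> e)"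
proof -
  have dl2: "isl2 (\<lambda>\<xi>. x m \<xi> - x n \<xi>)" for m n using isl2_diff[OF l2 l2] by blast
  have "Cauchy (\<lambda>n. x n \<xi>)" for \<xi>
  proof (rule CauchyI)
    fix e :: real assume "e > 0"
    then obtain N where N: "\<forall>m\<ge>N. \<forall>n\<ge>N. sqn (\<lambda>\<xi>. x m \<xi> - x n \<xi>) < e\<^sup>2"
      using cau[of "e\<^sup>2"] by auto
    show "\<exists>M. \<forall>m\<ge>M. \<forall>n\<ge>M. norm (x m \<xi> - x n \<xi>) < e"
    proof (intro exI allI impI)
      fix m n assume "m \<ge> N" "n \<ge> N"
      then have "(cmod (x m \<xi> - x n \<xi>))\<^sup>2 < e\<^sup>2"
        using N sqn_sq_le[OF dl2[of m n], of \<xi>] by force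
      then show "norm (x m \<xi> - x n \<xi>) < e" using \<open>e > 0\<close>
        by (meson abs_le_square_iff less_le_not_le norm_ge_zero power_less_imp_less_base)
    qed
  qed
  then have "convergent (\<lambda>n. x n \<xi>)" for \<xi> by (simp add: Cauchy_convergent_iff)
  then obtain y where y: "\<And>\<xi>. (\<lambda>n. x n \<xi>) \<longlonglongrightarrow> y \<xi>"
    unfolding convergent_def by metis
  have main: "\<exists>N. \<forall>n\<ge>N. isl2 (\<lambda>\<xi>. x n \<xi> - y \<xi>) \<and> sqn (\<lambda>\<xi>. x n \<xi> - y \<xi>) \<le> e" if e0: "e > 0" for e
  proof -
    obtain N where N: "\<forall>m\<ge>N. \<forall>n\<ge>N. sqn (\<lambda>\<xi>. x m \<xi> - x n \<xi>) < e"
      using cau[OF e0] by auto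
    have "isl2 (\<lambda>\<xi>. x n \<xi> - y \<xi>) \<and> sqn (\<lambda>\<xi>. x n \<xi> - y \<xi>) \<le> e" if "n \<ge> N" for n
    proof (rule bdd_isl2)
      fix F :: "'a set" assume "finite F"
      have lim: "(\<lambda>m. \<Sum>\<xi>\<in>F. (cmod (x n \<xi> - x m \<xi>))\<^sup>2) \<longlonglongrightarrow> (\<Sum>\<xi>\<in>F. (cmod (x n \<xi> - y \<xi>))\<^sup>2)"
        by (intro tendsto_intros y)
      have "\<forall>\<^sub>F m in sequentially. (\<Sum>\<xi>\<in>F. (cmod (x n \<xi> - x m \<xi>))\<^sup>2) \<le> e"
        using eventually_ge_at_top[of N]
      proof eventually_elim
        case (elim m)
        then show ?case using sum_le_sqn[OF dl2[of n m] \<open>finite F\<close>] N that by force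
      qed
      then show "(\<Sum>\<xi>\<in>F. (cmod (x n \<xi> - y \<xi>))\<^sup>2) \<le> e"
        using lim by (intro tendsto_upperbound) auto
    qed
    then show ?thesis by auto
  qed
  have "isl2 y"
  proof -
    obtain N where "isl2 (\<lambda>\<xi>. x N \<xi> - y \<xi>)" using main[of 1] by auto
    from isl2_diff[OF l2[of N] this] show ?thesis by simp
  qed
  with main show ?thesis by blast
qed


section \<open>Existence of characters\<close>

fun nmul :: "nat \<Rightarrow> 'a::ab_group_add \<Rightarrow> 'a" where
  "nmul 0 a = 0" | "nmul (Suc n) a = nmul n a + a"

definition zmul :: "int \<Rightarrow> 'a::ab_group_add \<Rightarrow> 'a" where
  "zmul m a = (if 0 \<le> m then nmul (nat m) a else - nmul (nat (-m)) a)"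

lemma nmul_add: "nmul (m + n) a = nmul m a + nmul n a"
  by (induction n) (auto simp: add.assoc)

lemma zmul_nat_diff: "zmul (int p - int q) a = nmul p a - nmul q a"
proof (cases "q \<le> p")
  case True
  then obtain d where p: "p = q + d" using le_Suc_ex by blast
  then show ?thesis by (simp add: zmul_def nmul_add)
next
  case False
  then obtain d where q: "q = p + d" "d > 0" by (metis less_imp_add_positive not_le)
  then show ?thesis by (simp add: zmul_def nmul_add)
qed

lemma zmul_repr: "zmul m a = nmul (nat m) a - nmul (nat (-m)) a"
proof -
  have "m = int (nat m) - int (nat (-m))" by simp
  then show ?thesis by (metis zmul_nat_diff)
qed

lemma zmul_add: "zmul (m + n) a = zmul m a + zmul n a"
proof -
  have "m + n = int (nat m + nat n) - int (nat (-m) + nat (-n))" by simp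
  then have "zmul (m + n) a = nmul (nat m + nat n) a - nmul (nat (-m) + nat (-n)) a"
    by (metis zmul_nat_diff)
  then show ?thesis by (simp add: zmul_repr nmul_add)
qed

lemma zmul_0 [simp]: "zmul 0 a = 0" by (simp add: zmul_def)
lemma zmul_1 [simp]: "zmul 1 a = a" by (simp add: zmul_def)
lemma zmul_of_0 [simp]: "zmul m 0 = 0"
proof -
  have "nmul k (0::'a) = 0" for k by (induction k) auto
  then show ?thesis by (simp add: zmul_def)
qed

lemma zmul_diff: "zmul (m - n) a = zmul m a - zmul n a"
  using zmul_add[of "m - n" n a] by (simp add: algebra_simps)

lemma zmul_mult: "zmul q (zmul n a) = zmul (n * q) a"
proof (induction q rule: int_induct[where k=0])
  case base then show ?case by simp
next
  case (step1 i)
  then show ?case using zmul_add[of i 1 "zmul n a"] zmul_add[of "n*i" n a]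
    by (simp add: algebra_simps)
next
  case (step2 i)
  have "zmul (i - 1) (zmul n a) = zmul i (zmul n a) - zmul n a" by (simp add: zmul_diff)
  also have "\<dots> = zmul (n*i) a - zmul n a" using step2 by simp
  also have "\<dots> = zmul (n*i - n) a" by (simp add: zmul_diff)
  also have "n*i - n = n*(i-1)" by (simp add: algebra_simps)
  finally show ?case .
qed

lemma nmul_pos: "(0::'a::linordered_ab_group_add) < a \<Longrightarrow> 0 < k \<Longrightarrow> 0 < nmul k a"
proof (induction k)
  case (Suc k) then show ?case by (cases "k = 0") (auto intro: add_pos_pos)
qed auto

lemma nmul_neg: "(a::'a::linordered_ab_group_add) < 0 \<Longrightarrow> 0 < k \<Longrightarrow> nmul k a < 0"
proof (induction k)
  case (Suc k) then show ?case by (cases "k = 0") (auto intro: add_neg_neg)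
qed auto

lemma nmul_nz: "(a::'a::linordered_ab_group_add) \<noteq> 0 \<Longrightarrow> 0 < k \<Longrightarrow> nmul k a \<noteq> 0"
  by (metis less_irrefl linorder_neqE nmul_neg nmul_pos)

lemma zmul_eq_0: "(a::'a::linordered_ab_group_add) \<noteq> 0 \<Longrightarrow> zmul m a = 0 \<Longrightarrow> m = 0"
proof (rule ccontr)
  assume a: "a \<noteq> 0" "zmul m a = 0" "m \<noteq> 0"
  show False
  proof (cases "0 \<le> m")
    case True
    then have "0 < nat m" using a by auto
    then show False using nmul_nz[OF a(1)] a True by (auto simp: zmul_def)
  next
    case False
    then have "0 < nat (-m)" using a by auto
    then show False using nmul_nz[OF a(1)] a False by (auto simp: zmul_def)
  qed
qed

definition pc :: "('a::ab_group_add \<times> complex) set \<Rightarrow> bool" where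
  "pc P \<longleftrightarrow> (0, 1) \<in> P \<and> (\<forall>a z b w. (a, z) \<in> P \<longrightarrow> (b, w) \<in> P \<longrightarrow> (a - b, z * cnj w) \<in> P)
     \<and> (\<forall>a z w. (a, z) \<in> P \<longrightarrow> (a, w) \<in> P \<longrightarrow> z = w) \<and> (\<forall>a z. (a, z) \<in> P \<longrightarrow> cmod z = 1)"

lemma unimod_cnj: "cmod z = 1 \<Longrightarrow> z * cnj z = 1"
  using complex_norm_square[of z] by simp

lemma unimod_cnj_inv: "cmod z = 1 \<Longrightarrow> cnj z = inverse z"
  using inverse_unique[OF unimod_cnj] by simp

lemma pc_neg: "pc P \<Longrightarrow> (b, w) \<in> P \<Longrightarrow> (- b, cnj w) \<in> P"
proof -
  assume "pc P" "(b, w) \<in> P"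
  then have "(0 - b, 1 * cnj w) \<in> P" unfolding pc_def by blast
  then show ?thesis by simp
qed

lemma pc_add: "pc P \<Longrightarrow> (a, z) \<in> P \<Longrightarrow> (b, w) \<in> P \<Longrightarrow> (a + b, z * w) \<in> P"
proof -
  assume p: "pc P" "(a, z) \<in> P" "(b, w) \<in> P"
  have "(- b, cnj w) \<in> P" by (rule pc_neg[OF p(1) p(3)])
  with p have "(a - (- b), z * cnj (cnj w)) \<in> P" unfolding pc_def by blast
  then show ?thesis by simp
qed

lemma pc_zmul: "pc P \<Longrightarrow> (b, v) \<in> P \<Longrightarrow> (zmul q b, v powi q) \<in> P"
proof (induction q rule: int_induct[where k=0])
  case base then show ?case by (simp add: pc_def)
next
  case (step1 i)
  have "v \<noteq> 0" using step1 unfolding pc_def by force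
  then have "(zmul i b + b, v powi i * v) \<in> P" using step1 pc_add by blast
  then show ?case using \<open>v \<noteq> 0\<close> by (simp add: zmul_add power_int_add)
next
  case (step2 i)
  have v: "cmod v = 1" using step2 unfolding pc_def by force
  then have "v \<noteq> 0" by auto
  have "(zmul i b - b, v powi i * cnj v) \<in> P" using step2 unfolding pc_def by blast
  then show ?case using \<open>v \<noteq> 0\<close> v
    by (simp add: zmul_diff power_int_diff unimod_cnj_inv divide_inverse)
qed

lemma pc_extend:
  fixes P :: "('a::ab_group_add \<times> complex) set"
  assumes P: "pc P" and dvd: "\<And>m. zmul m a \<in> fst ` P \<Longrightarrow> n dvd m"
    and w: "cmod w = 1" "(zmul n a, w powi n) \<in> P"
  shows "\<exists>P'. pc P' \<and> P \<subseteq> P' \<and> (a, w) \<in> P'"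
proof -
  define P' where "P' = {(h + zmul m a, z * w powi m) | h z m. (h, z) \<in> P}"
  have w0: "w \<noteq> 0" using w by auto
  have cw: "cnj (w powi m) = w powi (-m)" for m
    using w(1) by (simp add: unimod_cnj_inv power_int_minus power_int_inverse)
  have "pc P'"
    unfolding pc_def
  proof (intro conjI allI impI)
    have "(0 + zmul 0 a, 1 * w powi 0) \<in> P'" unfolding P'_def using P unfolding pc_def by blast
    then show "(0, 1) \<in> P'" by simp
  next
    fix x z y u assume "(x, z) \<in> P'" "(y, u) \<in> P'"
    then obtain h1 z1 m1 h2 z2 m2 where h: "(h1, z1) \<in> P" "(h2, z2) \<in> P"
      "x = h1 + zmul m1 a" "z = z1 * w powi m1" "y = h2 + zmul m2 a" "u = z2 * w powi m2"
      unfolding P'_def by blast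
    have "(h1 - h2, z1 * cnj z2) \<in> P" using h P unfolding pc_def by blast
    moreover have "x - y = (h1 - h2) + zmul (m1 - m2) a" using h by (simp add: zmul_diff)
    moreover have "z * cnj u = (z1 * cnj z2) * w powi (m1 - m2)"
      using h w0 by (simp add: unimod_cnj_inv[OF w(1)] power_int_inverse power_int_diff power_int_minus divide_inverse)
    ultimately show "(x - y, z * cnj u) \<in> P'" unfolding P'_def by blast
  next
    fix x z u assume "(x, z) \<in> P'" "(x, u) \<in> P'"
    then obtain h1 z1 m1 h2 z2 m2 where h: "(h1, z1) \<in> P" "(h2, z2) \<in> P"
      "x = h1 + zmul m1 a" "z = z1 * w powi m1" "x = h2 + zmul m2 a" "u = z2 * w powi m2"
      unfolding P'_def by blast
    have d: "(h2 - h1, z2 * cnj z1) \<in> P" using h P unfolding pc_def by blast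
    have e: "zmul (m1 - m2) a = h2 - h1" using h by (simp add: zmul_diff algebra_simps)
    then have "n dvd (m1 - m2)" using dvd d by force
    then obtain q where q: "m1 - m2 = n * q" by (auto elim: dvdE)
    have "(zmul q (zmul n a), (w powi n) powi q) \<in> P" using pc_zmul[OF P w(2)] .
    then have "(h2 - h1, w powi (m1 - m2)) \<in> P"
      using e q by (simp add: zmul_mult power_int_mult)
    then have "z2 * cnj z1 = w powi (m1 - m2)" using d P unfolding pc_def by blast
    moreover have "cmod z1 = 1" using h P unfolding pc_def by blast
    ultimately have "z2 = z1 * w powi (m1 - m2)"
      by (metis mult.assoc mult.commute mult_1 unimod_cnj)
    then show "z = u" using h w0 by (simp add: power_int_diff)
  next
    fix x z assume "(x, z) \<in> P'"
    then obtain h1 z1 m1 where h: "(h1, z1) \<in> P" "z = z1 * w powi m1"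
      unfolding P'_def by blast
    then show "cmod z = 1" using P w unfolding pc_def by (simp add: norm_mult norm_power_int)
  qed
  moreover have "P \<subseteq> P'"
  proof
    fix p assume "p \<in> P"
    then obtain h z where hz: "p = (h, z)" "(h, z) \<in> P" by (cases p) auto
    then have "(h + zmul 0 a, z * w powi 0) \<in> P'" unfolding P'_def by blast
    then show "p \<in> P'" using hz by simp
  qed
  moreover have "(a, w) \<in> P'"
  proof -
    have "(0 + zmul 1 a, 1 * w powi 1) \<in> P'" unfolding P'_def using P unfolding pc_def by blast
    then show ?thesis by simp
  qed
  ultimately show ?thesis by blast
qed

lemma int_subgroup_gen:
  fixes S :: "int set"
  assumes "0 \<in> S" "\<And>x y. x \<in> S \<Longrightarrow> y \<in> S \<Longrightarrow> x - y \<in> S"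
    and mult: "\<And>x q. x \<in> S \<Longrightarrow> x * q \<in> S"
  shows "\<exists>n\<in>S. \<forall>m\<in>S. n dvd m"
proof (cases "\<exists>k::nat. 0 < k \<and> int k \<in> S")
  case False
  have "m = 0" if "m \<in> S" for m
  proof (rule ccontr)
    assume "m \<noteq> 0"
    then have "int (nat \<bar>m\<bar>) \<in> S \<and> 0 < nat \<bar>m\<bar>"
      using that mult[of m "-1"] by (cases "m < 0") auto
    then show False using False by blast
  qed
  then show ?thesis using assms(1) by auto
next
  case True
  define n where "n = (LEAST k::nat. 0 < k \<and> int k \<in> S)"
  have n: "0 < n" "int n \<in> S" using LeastI_ex[OF True] unfolding n_def by auto
  have "int n dvd m" if "m \<in> S" for m
  proof -
    have "m mod int n = m - int n * (m div int n)" by (metis minus_div_mult_eq_mod mult.commute)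
    then have inS: "m mod int n \<in> S" using assms(2)[OF that mult[OF n(2)]] by simp
    have "m mod int n = 0"
    proof (rule ccontr)
      assume nz: "m mod int n \<noteq> 0"
      have ge: "0 \<le> m mod int n" "m mod int n < int n" using n(1) by auto
      then have "0 < nat (m mod int n) \<and> int (nat (m mod int n)) \<in> S" using nz inS by auto
      then have "n \<le> nat (m mod int n)" unfolding n_def by (rule Least_le)
      then show False using ge by linarith
    qed
    then show ?thesis by (simp add: dvd_eq_mod_eq_0)
  qed
  then show ?thesis using n by blast
qed

lemma pc_extend_any:
  fixes P :: "('a::ab_group_add \<times> complex) set"
  assumes P: "pc P"
  shows "\<exists>P'. pc P' \<and> P \<subseteq> P' \<and> a \<in> fst ` P'"
proof -
  define S where "S = {m. zmul m a \<in> fst ` P}"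
  have S0: "0 \<in> S" unfolding S_def using P unfolding pc_def by force
  have Sd: "x - y \<in> S" if "x \<in> S" "y \<in> S" for x y
  proof -
    have "zmul x a \<in> fst ` P" "zmul y a \<in> fst ` P" using that unfolding S_def by auto
    then obtain z u where "(zmul x a, z) \<in> P" "(zmul y a, u) \<in> P" by force
    then have "(zmul x a - zmul y a, z * cnj u) \<in> P" using P unfolding pc_def by blast
    then show ?thesis unfolding S_def by (force simp: zmul_diff)
  qed
  have Sm: "x * q \<in> S" if "x \<in> S" for x q
  proof -
    have "zmul x a \<in> fst ` P" using that unfolding S_def by auto
    then obtain z where "(zmul x a, z) \<in> P" by force
    from pc_zmul[OF P this, of q] show ?thesis unfolding S_def by (force simp: zmul_mult)
  qed
  obtain n where n: "n \<in> S" "\<And>m. m \<in> S \<Longrightarrow> n dvd m" using int_subgroup_gen[OF S0 Sd Sm] by blast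
  obtain v where v: "(zmul n a, v) \<in> P" using n(1) unfolding S_def by auto
  have cv: "cmod v = 1" using v P unfolding pc_def by blast
  show ?thesis
  proof (cases "n = 0")
    case True
    have "v = 1" using v P True unfolding pc_def by auto
    with True v have v1: "(zmul n a, 1 powi n) \<in> P" by simp
    have "\<exists>P'. pc P' \<and> P \<subseteq> P' \<and> (a, 1) \<in> P'"
      by (rule pc_extend[OF P _ _ v1]) (use n in \<open>auto simp: S_def\<close>)
    then show ?thesis by force
  next
    case False
    define w where "w = cis (Arg v / of_int n)"
    have "w powi n = cis (Arg v)" unfolding w_def using False by (simp add: cis_power_int)
    also have "\<dots> = v"
    proof -
      have "v \<noteq> 0" using cv by auto
      then show ?thesis using cis_Arg[of v] cv by (simp add: sgn_eq)
    qed
    finally have "(zmul n a, w powi n) \<in> P" using v by simp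
    moreover have "cmod w = 1" unfolding w_def by simp
    ultimately have "\<exists>P'. pc P' \<and> P \<subseteq> P' \<and> (a, w) \<in> P'"
      by (intro pc_extend[OF P]) (use n in \<open>auto simp: S_def\<close>)
    then show ?thesis by force
  qed
qed

lemma pc_chain:
  assumes C: "C \<in> chains {P. pc P \<and> P0 \<subseteq> P}" and P0: "pc P0"
  shows "pc (P0 \<union> \<Union>C)"
proof -
  have Cp: "\<And>P. P \<in> C \<Longrightarrow> pc P \<and> P0 \<subseteq> P" using C unfolding chains_def by auto
  have ch: "\<And>A B. A \<in> C \<Longrightarrow> B \<in> C \<Longrightarrow> A \<subseteq> B \<or> B \<subseteq> A"
    using C unfolding chains_def chain_subset_def by auto
  have two: "\<exists>Q. pc Q \<and> x \<in> Q \<and> y \<in> Q \<and> Q \<subseteq> P0 \<union> \<Union>C"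
    if "x \<in> P0 \<union> \<Union>C" "y \<in> P0 \<union> \<Union>C" for x y
  proof -
    from that consider "x \<in> P0" "y \<in> P0" | A where "A \<in> C" "x \<in> A" "y \<in> P0"
      | B where "B \<in> C" "x \<in> P0" "y \<in> B" | A B where "A \<in> C" "B \<in> C" "x \<in> A" "y \<in> B"
      by blast
    then show ?thesis
    proof cases
      case 1 then show ?thesis using P0 by blast
    next
      case (2 A) then show ?thesis using Cp[of A] by blast
    next
      case (3 B) then show ?thesis using Cp[of B] by blast
    next
      case (4 A B) then show ?thesis using Cp[of A] Cp[of B] ch[of A B] by blast
    qed
  qed
  show ?thesis unfolding pc_def
  proof (intro conjI allI impI)
    show "(0, 1) \<in> P0 \<union> \<Union>C" using P0 unfolding pc_def by blast
  next
    fix a z b w assume "(a, z) \<in> P0 \<union> \<Union>C" "(b, w) \<in> P0 \<union> \<Union>C"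
    from two[OF this] obtain Q where Q: "pc Q" "(a, z) \<in> Q" "(b, w) \<in> Q" "Q \<subseteq> P0 \<union> \<Union>C" by blast
    have "(a - b, z * cnj w) \<in> Q" using Q(1-3) unfolding pc_def by blast
    then show "(a - b, z * cnj w) \<in> P0 \<union> \<Union>C" using Q(4) by blast
  next
    fix a z w assume "(a, z) \<in> P0 \<union> \<Union>C" "(a, w) \<in> P0 \<union> \<Union>C"
    from two[OF this] obtain Q where Q: "pc Q" "(a, z) \<in> Q" "(a, w) \<in> Q" by blast
    then show "z = w" unfolding pc_def by blast
  next
    fix a z assume "(a, z) \<in> P0 \<union> \<Union>C"
    from two[OF this this] obtain Q where Q: "pc Q" "(a, z) \<in> Q" by blast
    then show "cmod z = 1" unfolding pc_def by blast
  qed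
qed

lemma char_exists:
  fixes \<xi> :: "'a::linordered_ab_group_add"
  assumes "\<xi> \<noteq> 0"
  shows "\<exists>\<gamma>\<in>dual_group. \<gamma> \<xi> = -1"
proof -
  have pc1: "pc {(0::'a, 1::complex)}" unfolding pc_def by auto
  have "\<exists>P'. pc P' \<and> {(0::'a, 1::complex)} \<subseteq> P' \<and> (\<xi>, -1) \<in> P'"
  proof (rule pc_extend[OF pc1, where n=0])
    show "zmul m \<xi> \<in> fst ` {(0, 1)} \<Longrightarrow> 0 dvd m" for m using zmul_eq_0[OF assms] by auto
  qed auto
  then obtain P0 where P0: "pc P0" "(\<xi>, -1) \<in> P0" by blast
  define A where "A = {P. pc P \<and> P0 \<subseteq> P}"
  have "\<forall>C\<in>chains A. \<exists>U\<in>A. \<forall>X\<in>C. X \<subseteq> U"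
  proof
    fix C assume "C \<in> chains A"
    then have "pc (P0 \<union> \<Union>C)" using pc_chain P0 unfolding A_def by blast
    then show "\<exists>U\<in>A. \<forall>X\<in>C. X \<subseteq> U" unfolding A_def by (intro bexI[of _ "P0 \<union> \<Union>C"]) auto
  qed
  from Zorn_Lemma2[OF this] obtain M where M: "M \<in> A" "\<forall>X\<in>A. M \<subseteq> X \<longrightarrow> X = M"
    by blast
  have Mpc: "pc M" and P0M: "P0 \<subseteq> M" using M(1) unfolding A_def by auto
  have tot: "a \<in> fst ` M" for a
  proof -
    obtain P' where "pc P'" "M \<subseteq> P'" "a \<in> fst ` P'" using pc_extend_any[OF Mpc] by blast
    moreover then have "P' \<in> A" using P0M unfolding A_def by auto
    ultimately show ?thesis using M(2) by auto
  qed
  define \<gamma> where "\<gamma> a = (THE z. (a, z) \<in> M)" for a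
  have g: "(a, \<gamma> a) \<in> M" for a
  proof -
    obtain z where z: "(a, z) \<in> M" using tot[of a] by force
    then have "(THE z. (a, z) \<in> M) = z" using Mpc unfolding pc_def by blast
    with z show ?thesis unfolding \<gamma>_def by simp
  qed
  have gu: "(a, z) \<in> M \<Longrightarrow> \<gamma> a = z" for a z using g[of a] Mpc unfolding pc_def by blast
  have "\<gamma> \<in> dual_group" unfolding dual_group_def
  proof (intro CollectI conjI allI)
    show "cmod (\<gamma> x) = 1" for x using g[of x] Mpc unfolding pc_def by blast
    show "\<gamma> (a + b) = \<gamma> a * \<gamma> b" for a b using pc_add[OF Mpc g[of a] g[of b]] gu by blast
  qed
  moreover have "\<gamma> \<xi> = -1" using gu P0 P0M by blast
  ultimately show ?thesis by blast
qed


section \<open>Characters and Haar measure basics\<close>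

lemma dg_norm: "\<gamma> \<in> dual_group \<Longrightarrow> cmod (\<gamma> \<xi>) = 1"
  unfolding dual_group_def by auto

lemma dg_add: "\<gamma> \<in> dual_group \<Longrightarrow> \<gamma> (a + b) = \<gamma> a * \<gamma> b"
  unfolding dual_group_def by auto

lemma dg_0: "\<gamma> \<in> dual_group \<Longrightarrow> \<gamma> 0 = 1"
proof -
  assume g: "\<gamma> \<in> dual_group"
  have "\<gamma> 0 = \<gamma> 0 * \<gamma> 0" using dg_add[OF g, of 0 0] by simp
  moreover have "\<gamma> 0 \<noteq> 0" using dg_norm[OF g, of 0] by auto
  ultimately show ?thesis by simp
qed

lemma dg_minus: "\<gamma> \<in> dual_group \<Longrightarrow> \<gamma> (- a) = cnj (\<gamma> a)"
proof -
  assume g: "\<gamma> \<in> dual_group"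
  have "\<gamma> a * \<gamma> (- a) = 1" using dg_add[OF g, of a "-a"] dg_0[OF g] by simp
  then have "\<gamma> (- a) = inverse (\<gamma> a)" by (metis inverse_unique)
  then show ?thesis using unimod_cnj_inv[OF dg_norm[OF g]] by simp
qed

lemma dg_diff: "\<gamma> \<in> dual_group \<Longrightarrow> \<gamma> (a - b) = \<gamma> a * cnj (\<gamma> b)"
  using dg_add[of \<gamma> a "-b"] dg_minus[of \<gamma> b] by simp

lemma dg_mult: "h \<in> dual_group \<Longrightarrow> \<gamma> \<in> dual_group \<Longrightarrow> (\<lambda>\<xi>. h \<xi> * \<gamma> \<xi>) \<in> dual_group"
  unfolding dual_group_def by (auto simp: norm_mult)

lemma cnj_meas[measurable]: "f \<in> borel_measurable M \<Longrightarrow> (\<lambda>x. cnj (f x)) \<in> borel_measurable M"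
  by (rule borel_measurable_continuous_on[OF continuous_on_cnj[OF continuous_on_id]])

lemma mult_cnj_sq: "z * cnj z = complex_of_real ((cmod z)\<^sup>2)"
  by (rule complex_norm_square[symmetric])

definition tp :: "'x set \<Rightarrow> ('x \<Rightarrow> complex) \<Rightarrow> ('x \<Rightarrow> complex) \<Rightarrow> complex" where
  "tp F c \<gamma> = (\<Sum>\<xi>\<in>F. c \<xi> * \<gamma> \<xi>)"

locale haarG =
  fixes \<mu> :: "('x::linordered_ab_group_add \<Rightarrow> complex) measure"
  assumes haar: "haar \<mu>"
begin

lemma prob: "prob_space \<mu>" using haar unfolding haar_def by auto

sublocale prob_space \<mu> by (rule prob)

lemma spG: "space \<mu> = dual_group" using haar unfolding haar_def by auto

abbreviation GEN where
  "GEN \<equiv> {{\<gamma> \<in> dual_group. \<gamma> \<xi> \<in> A} | \<xi> A. A \<in> sets borel} :: ('x \<Rightarrow> complex) set set"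

lemma setsG: "sets \<mu> = sigma_sets dual_group GEN"
  using haar unfolding haar_def by auto

lemma meas_char[measurable]: "(\<lambda>\<gamma>. \<gamma> \<xi>) \<in> borel_measurable \<mu>"
proof (rule measurableI)
  fix A :: "complex set" assume "A \<in> sets borel"
  then have "{\<gamma> \<in> dual_group. \<gamma> \<xi> \<in> A} \<in> GEN" by blast
  then have "{\<gamma> \<in> dual_group. \<gamma> \<xi> \<in> A} \<in> sets \<mu>" unfolding setsG by (rule sigma_sets.Basic)
  moreover have "(\<lambda>\<gamma>. \<gamma> \<xi>) -` A \<inter> space \<mu> = {\<gamma> \<in> dual_group. \<gamma> \<xi> \<in> A}" using spG by auto
  ultimately show "(\<lambda>\<gamma>. \<gamma> \<xi>) -` A \<inter> space \<mu> \<in> sets \<mu>" by simp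
qed auto

definition bm :: "(('x \<Rightarrow> complex) \<Rightarrow> complex) \<Rightarrow> bool" where
  "bm f \<longleftrightarrow> f \<in> borel_measurable \<mu> \<and> (\<exists>C. \<forall>x\<in>space \<mu>. cmod (f x) \<le> C)"

lemma bm_integrable: "bm f \<Longrightarrow> integrable \<mu> f"
  unfolding bm_def by (auto intro: integrable_const_bound)

lemma bm_meas: "bm f \<Longrightarrow> f \<in> borel_measurable \<mu>" unfolding bm_def by auto

lemma bm_bound: "bm f \<Longrightarrow> \<exists>C. 0 \<le> C \<and> (\<forall>x\<in>space \<mu>. cmod (f x) \<le> C)"
  unfolding bm_def by (meson norm_ge_zero order_trans)

lemma bm_add: "bm f \<Longrightarrow> bm g \<Longrightarrow> bm (\<lambda>x. f x + g x)"
  unfolding bm_def by (auto intro!: exI[where x="_ + _"] order_trans[OF norm_triangle_ineq] add_mono)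

lemma bm_minus: "bm f \<Longrightarrow> bm (\<lambda>x. - f x)"
  unfolding bm_def by auto

lemma bm_diff: "bm f \<Longrightarrow> bm g \<Longrightarrow> bm (\<lambda>x. f x - g x)"
  using bm_add[of f "\<lambda>x. - g x"] bm_minus[of g] by simp

lemma bm_mult: "bm f \<Longrightarrow> bm g \<Longrightarrow> bm (\<lambda>x. f x * g x)"
proof -
  assume "bm f" "bm g"
  then obtain C D where "0 \<le> C" "\<forall>x\<in>space \<mu>. cmod (f x) \<le> C" "\<forall>x\<in>space \<mu>. cmod (g x) \<le> D"
    using bm_bound by blast
  then have "\<forall>x\<in>space \<mu>. cmod (f x * g x) \<le> C * D"
    by (auto simp: norm_mult intro: mult_mono)
  then show ?thesis using \<open>bm f\<close> \<open>bm g\<close> unfolding bm_def by auto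
qed

lemma bm_cnj: "bm f \<Longrightarrow> bm (\<lambda>x. cnj (f x))"
  unfolding bm_def by (auto intro: cnj_meas)

lemma bm_const: "bm (\<lambda>x. c)"
  unfolding bm_def by auto

lemma bm_char: "bm (\<lambda>\<gamma>. \<gamma> \<xi>)"
  unfolding bm_def using spG by (auto intro!: exI[of _ 1] simp: dg_norm)

lemma bm_sum: "finite F \<Longrightarrow> (\<And>i. i \<in> F \<Longrightarrow> bm (f i)) \<Longrightarrow> bm (\<lambda>x. \<Sum>i\<in>F. f i x)"
  by (induction F rule: finite_induct) (auto intro: bm_add bm_const)

lemma bm_tp: "finite F \<Longrightarrow> bm (tp F c)"
  unfolding tp_def by (intro bm_sum bm_mult bm_const bm_char)

lemma bm_cong: "bm f \<Longrightarrow> (\<And>x. x \<in> space \<mu> \<Longrightarrow> f x = g x) \<Longrightarrow> bm g"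
proof -
  assume a: "bm f" and b: "\<And>x. x \<in> space \<mu> \<Longrightarrow> f x = g x"
  have "g \<in> borel_measurable \<mu>" using measurable_cong[of \<mu> f g] a b unfolding bm_def by simp
  moreover obtain C where "\<forall>x\<in>space \<mu>. cmod (f x) \<le> C" using a unfolding bm_def by auto
  ultimately show ?thesis unfolding bm_def using b by auto
qed

definition tr :: "('x \<Rightarrow> complex) \<Rightarrow> ('x \<Rightarrow> complex) \<Rightarrow> ('x \<Rightarrow> complex)" where
  "tr h \<gamma> = (\<lambda>\<xi>. h \<xi> * \<gamma> \<xi>)"

lemma tr_meas: assumes h: "h \<in> dual_group" shows "tr h \<in> measurable \<mu> \<mu>"
proof (rule measurable_sigma_sets[OF setsG])
  show "GEN \<subseteq> Pow dual_group" by auto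
  show "tr h \<in> space \<mu> \<rightarrow> dual_group" using dg_mult[OF h] spG unfolding tr_def by auto
  fix y assume "y \<in> GEN"
  then obtain \<xi> A where y: "y = {\<gamma> \<in> dual_group. \<gamma> \<xi> \<in> A}" "A \<in> sets borel" by blast
  have "tr h -` y \<inter> space \<mu> = {\<gamma> \<in> space \<mu>. h \<xi> * \<gamma> \<xi> \<in> A}"
    using dg_mult[OF h] spG unfolding y tr_def by auto
  also have "\<dots> \<in> sets \<mu>" using y(2) by measurable
  finally show "tr h -` y \<inter> space \<mu> \<in> sets \<mu>" .
qed

lemma integral_tr:
  fixes f :: "('x \<Rightarrow> complex) \<Rightarrow> complex"
  assumes h: "h \<in> dual_group" and f: "f \<in> borel_measurable \<mu>"
  shows "integral\<^sup>L \<mu> f = integral\<^sup>L \<mu> (\<lambda>\<gamma>. f (tr h \<gamma>))"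
proof -
  have "distr \<mu> \<mu> (tr h) = \<mu>" using haar h unfolding haar_def tr_def by auto
  then have "integral\<^sup>L \<mu> f = integral\<^sup>L (distr \<mu> \<mu> (tr h)) f" by simp
  also have "\<dots> = integral\<^sup>L \<mu> (\<lambda>\<gamma>. f (tr h \<gamma>))" by (rule integral_distr[OF tr_meas[OF h] f])
  finally show ?thesis .
qed

lemma integral_char: "integral\<^sup>L \<mu> (\<lambda>\<gamma>. \<gamma> \<xi>) = (if \<xi> = 0 then 1 else 0)"
proof (cases "\<xi> = 0")
  case True
  have "integral\<^sup>L \<mu> (\<lambda>\<gamma>. \<gamma> \<xi>) = integral\<^sup>L \<mu> (\<lambda>\<gamma>. 1)"
    using spG dg_0 True by (intro Bochner_Integration.integral_cong) auto
  then show ?thesis using True by (simp add: prob_space)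
next
  case False
  obtain h where h: "h \<in> dual_group" "h \<xi> = -1" using char_exists[OF False] by blast
  have "integral\<^sup>L \<mu> (\<lambda>\<gamma>. \<gamma> \<xi>) = integral\<^sup>L \<mu> (\<lambda>\<gamma>. tr h \<gamma> \<xi>)"
    by (rule integral_tr[OF h(1)]) simp
  also have "\<dots> = - integral\<^sup>L \<mu> (\<lambda>\<gamma>. \<gamma> \<xi>)" unfolding tr_def h(2) by simp
  finally show ?thesis using False by simp
qed

definition ip :: "(('x \<Rightarrow> complex) \<Rightarrow> complex) \<Rightarrow> (('x \<Rightarrow> complex) \<Rightarrow> complex) \<Rightarrow> complex" where
  "ip f g = integral\<^sup>L \<mu> (\<lambda>x. f x * cnj (g x))"

definition N2 :: "(('x \<Rightarrow> complex) \<Rightarrow> complex) \<Rightarrow> real" where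
  "N2 f = integral\<^sup>L \<mu> (\<lambda>x. (cmod (f x))\<^sup>2)"

lemma fourier_ip: "fourier \<mu> f \<xi> = ip f (\<lambda>\<gamma>. \<gamma> \<xi>)"
  unfolding fourier_def ip_def ..

lemma N2_ip: "complex_of_real (N2 f) = ip f f"
  unfolding N2_def ip_def integral_complex_of_real[symmetric] mult_cnj_sq ..

lemma N2_nonneg: "0 \<le> N2 f"
  unfolding N2_def by simp

lemma ip_cnj: "ip g f = cnj (ip f g)"
  unfolding ip_def Bochner_Integration.integral_cnj[symmetric] by (simp add: mult.commute)

lemma ip_add_left: "bm f \<Longrightarrow> bm g \<Longrightarrow> bm h \<Longrightarrow> ip (\<lambda>x. f x + g x) h = ip f h + ip g h"
  unfolding ip_def by (simp add: distrib_right bm_integrable bm_mult bm_cnj)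

lemma ip_diff_left: "bm f \<Longrightarrow> bm g \<Longrightarrow> bm h \<Longrightarrow> ip (\<lambda>x. f x - g x) h = ip f h - ip g h"
  unfolding ip_def by (simp add: left_diff_distrib bm_integrable bm_mult bm_cnj)

lemma ip_diff_right: "bm f \<Longrightarrow> bm g \<Longrightarrow> bm h \<Longrightarrow> ip h (\<lambda>x. f x - g x) = ip h f - ip h g"
proof -
  assume a: "bm f" "bm g" "bm h"
  have "ip h (\<lambda>x. f x - g x) = cnj (ip (\<lambda>x. f x - g x) h)" by (rule ip_cnj)
  also have "\<dots> = cnj (ip f h - ip g h)" using a by (simp add: ip_diff_left)
  also have "\<dots> = ip h f - ip h g" using ip_cnj[of h f] ip_cnj[of h g] by simp
  finally show ?thesis .
qed

lemma ip_scale_left: "ip (\<lambda>x. c * f x) h = c * ip f h"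
  unfolding ip_def by (simp add: mult.assoc)

lemma ip_sum_left: "finite F \<Longrightarrow> (\<And>i. i \<in> F \<Longrightarrow> bm (f i)) \<Longrightarrow> bm h \<Longrightarrow>
    ip (\<lambda>x. \<Sum>i\<in>F. f i x) h = (\<Sum>i\<in>F. ip (f i) h)"
  unfolding ip_def by (simp add: sum_distrib_right bm_integrable bm_mult bm_cnj integral_sum)

lemma ip_char: "ip (\<lambda>\<gamma>. \<gamma> a) (\<lambda>\<gamma>. \<gamma> b) = (if a = b then 1 else 0)"
proof -
  have "ip (\<lambda>\<gamma>. \<gamma> a) (\<lambda>\<gamma>. \<gamma> b) = integral\<^sup>L \<mu> (\<lambda>\<gamma>. \<gamma> (a - b))"
    unfolding ip_def using spG by (intro Bochner_Integration.integral_cong) (auto simp: dg_diff)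
  then show ?thesis by (simp add: integral_char)
qed

lemma ip_tp_left: "finite F \<Longrightarrow> bm g \<Longrightarrow> ip (tp F c) g = (\<Sum>\<xi>\<in>F. c \<xi> * cnj (fourier \<mu> g \<xi>))"
proof -
  assume F: "finite F" and g: "bm g"
  have "ip (tp F c) g = (\<Sum>\<xi>\<in>F. ip (\<lambda>\<gamma>. c \<xi> * \<gamma> \<xi>) g)"
    unfolding tp_def using F g by (intro ip_sum_left) (auto intro: bm_mult bm_const bm_char)
  also have "\<dots> = (\<Sum>\<xi>\<in>F. c \<xi> * cnj (fourier \<mu> g \<xi>))"
    by (simp add: ip_scale_left fourier_ip ip_cnj[of g])
  finally show ?thesis .
qed

lemma fourier_tp: "finite F \<Longrightarrow> fourier \<mu> (tp F c) \<xi> = (if \<xi> \<in> F then c \<xi> else 0)"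
proof -
  assume F: "finite F"
  have "fourier \<mu> (tp F c) \<xi> = (\<Sum>\<eta>\<in>F. c \<eta> * cnj (fourier \<mu> (\<lambda>\<gamma>. \<gamma> \<xi>) \<eta>))"
    unfolding fourier_ip using F by (subst ip_tp_left) (auto intro: bm_char simp: fourier_ip)
  also have "\<dots> = (\<Sum>\<eta>\<in>F. c \<eta> * (if \<eta> = \<xi> then 1 else 0))"
    by (intro sum.cong) (auto simp: fourier_ip ip_char)
  also have "\<dots> = (\<Sum>\<eta>\<in>F. if \<eta> = \<xi> then c \<eta> else 0)" by (intro sum.cong) auto
  also have "\<dots> = (if \<xi> \<in> F then c \<xi> else 0)"
    using F by (simp add: sum.delta)
  finally show ?thesis .
qed

lemma N2_tp: "finite F \<Longrightarrow> N2 (tp F c) = (\<Sum>\<xi>\<in>F. (cmod (c \<xi>))\<^sup>2)"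
proof -
  assume F: "finite F"
  have "complex_of_real (N2 (tp F c)) = (\<Sum>\<xi>\<in>F. c \<xi> * cnj (c \<xi>))"
    unfolding N2_ip using F by (simp add: ip_tp_left bm_tp fourier_tp)
  also have "\<dots> = complex_of_real (\<Sum>\<xi>\<in>F. (cmod (c \<xi>))\<^sup>2)"
    unfolding mult_cnj_sq of_real_sum ..
  finally show ?thesis using of_real_eq_iff by blast
qed

lemma N2_diff_expand: "bm f \<Longrightarrow> bm g \<Longrightarrow>
   complex_of_real (N2 (\<lambda>x. f x - g x)) = ip f f - ip f g - ip g f + ip g g"
  unfolding N2_ip by (simp add: ip_diff_left ip_diff_right bm_diff)

lemma N2_tp_approx:
  assumes f: "bm f" and F: "finite F"
  shows "N2 (\<lambda>x. f x - tp F d x) = N2 f - (\<Sum>\<xi>\<in>F. (cmod (fourier \<mu> f \<xi>))\<^sup>2)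
            + (\<Sum>\<xi>\<in>F. (cmod (fourier \<mu> f \<xi> - d \<xi>))\<^sup>2)"
proof -
  let ?a = "fourier \<mu> f"
  have e1: "ip (tp F d) f = (\<Sum>\<xi>\<in>F. d \<xi> * cnj (?a \<xi>))" using F f by (rule ip_tp_left)
  have e2: "ip f (tp F d) = cnj (\<Sum>\<xi>\<in>F. d \<xi> * cnj (?a \<xi>))" using ip_cnj[of f "tp F d"] e1 by simp
  have e3: "ip (tp F d) (tp F d) = (\<Sum>\<xi>\<in>F. d \<xi> * cnj (d \<xi>))"
    using F by (simp add: ip_tp_left bm_tp fourier_tp)
  have "complex_of_real (N2 (\<lambda>x. f x - tp F d x))
     = complex_of_real (N2 f) - cnj (\<Sum>\<xi>\<in>F. d \<xi> * cnj (?a \<xi>)) - (\<Sum>\<xi>\<in>F. d \<xi> * cnj (?a \<xi>))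
       + (\<Sum>\<xi>\<in>F. d \<xi> * cnj (d \<xi>))"
    using N2_diff_expand[OF f bm_tp[OF F], of d] unfolding e1 e2 e3 N2_ip by simp
  also have "\<dots> = complex_of_real (N2 f) - (\<Sum>\<xi>\<in>F. ?a \<xi> * cnj (?a \<xi>)) +
      (\<Sum>\<xi>\<in>F. ?a \<xi> * cnj (?a \<xi>) - d \<xi> * cnj (?a \<xi>) - ?a \<xi> * cnj (d \<xi>) + d \<xi> * cnj (d \<xi>))"
    by (simp add: sum.distrib sum_subtractf algebra_simps)
  also have "\<dots> = complex_of_real (N2 f - (\<Sum>\<xi>\<in>F. (cmod (?a \<xi>))\<^sup>2) + (\<Sum>\<xi>\<in>F. (cmod (?a \<xi> - d \<xi>))\<^sup>2))"
  proof -
    have pt: "complex_of_real ((cmod (?a \<xi> - d \<xi>))\<^sup>2) =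
       ?a \<xi> * cnj (?a \<xi>) - d \<xi> * cnj (?a \<xi>) - ?a \<xi> * cnj (d \<xi>) + d \<xi> * cnj (d \<xi>)" for \<xi>
      unfolding mult_cnj_sq[symmetric] by (simp add: algebra_simps)
    show ?thesis unfolding of_real_add of_real_diff of_real_sum pt mult_cnj_sq ..
  qed
  finally show ?thesis using of_real_eq_iff by blast
qed

lemma bessel_finite:
  assumes f: "bm f" and F: "finite F"
  shows "(\<Sum>\<xi>\<in>F. (cmod (fourier \<mu> f \<xi>))\<^sup>2) \<le> N2 f"
  using N2_tp_approx[OF f F, of "fourier \<mu> f"] N2_nonneg[of "\<lambda>x. f x - tp F (fourier \<mu> f) x"] by simp

lemma bessel: "bm f \<Longrightarrow> isl2 (fourier \<mu> f) \<and> sqn (fourier \<mu> f) \<le> N2 f"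
  by (rule bdd_isl2) (rule bessel_finite)

end


section \<open>Topology of the dual group and Stone-Weierstrass\<close>

typedef 'a cf = "UNIV :: ('a \<Rightarrow> complex) set" by auto

instantiation cf :: (type) topological_space
begin
definition open_cf :: "'a cf set \<Rightarrow> bool" where "open_cf S \<longleftrightarrow> open (Rep_cf ` S)"
instance
proof
  show "open (UNIV :: 'a cf set)" unfolding open_cf_def
    by (simp add: type_definition.Rep_range[OF type_definition_cf])
  fix S T :: "'a cf set" assume "open S" "open T"
  moreover have "Rep_cf ` (S \<inter> T) = Rep_cf ` S \<inter> Rep_cf ` T"
    by (intro image_Int inj_onI) (simp add: Rep_cf_inject)
  ultimately show "open (S \<inter> T)" unfolding open_cf_def by auto
next
  fix K :: "'a cf set set" assume "\<forall>S\<in>K. open S"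
  then show "open (\<Union>K)" unfolding open_cf_def by (auto simp: image_Union)
qed
end

lemma Rep_cf_surj: "Rep_cf ` (Rep_cf -` A) = A"
  by (simp add: type_definition.Rep_range[OF type_definition_cf] image_vimage_eq)

lemma Rep_Abs_cf [simp]: "Rep_cf (Abs_cf x) = x"
  by (simp add: Abs_cf_inverse)

lemma open_Rep_vimage: "open A \<Longrightarrow> open (Rep_cf -` A)"
  unfolding open_cf_def Rep_cf_surj .

lemma cont_Rep_cf: "continuous_on S Rep_cf"
proof -
  have "continuous_on UNIV Rep_cf"
    unfolding continuous_on_open_vimage[OF open_UNIV] using open_Rep_vimage by auto
  then show ?thesis using continuous_on_subset by blast
qed

lemma cont_Abs_cf: "continuous_on S Abs_cf"
proof -
  have eq: "Abs_cf -` B = Rep_cf ` B" for B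
  proof (rule set_eqI)
    fix x
    have "x \<in> Rep_cf ` B \<longleftrightarrow> Abs_cf x \<in> B"
      by (metis Rep_Abs_cf Rep_cf_inverse image_iff)
    then show "x \<in> Abs_cf -` B \<longleftrightarrow> x \<in> Rep_cf ` B" by simp
  qed
  have "continuous_on UNIV Abs_cf"
    unfolding continuous_on_open_vimage[OF open_UNIV] open_cf_def by (simp add: eq)
  then show ?thesis using continuous_on_subset by blast
qed

instance cf :: (type) t2_space
proof
  fix f g :: "'a cf" assume "f \<noteq> g"
  then have "Rep_cf f \<noteq> Rep_cf g" by (simp add: Rep_cf_inject)
  then obtain i where i: "Rep_cf f i \<noteq> Rep_cf g i" by auto
  then obtain U V where UV: "open U" "open V" "Rep_cf f i \<in> U" "Rep_cf g i \<in> V" "U \<inter> V = {}"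
    using hausdorff[OF i] by blast
  have c: "continuous_on UNIV (\<lambda>h::'a \<Rightarrow> complex. h i)" by simp
  have "open ((\<lambda>h::'a \<Rightarrow> complex. h i) -` U)" "open ((\<lambda>h::'a \<Rightarrow> complex. h i) -` V)"
    using continuous_on_open_vimage[OF open_UNIV, THEN iffD1, OF c] UV by auto
  then have "open (Rep_cf -` ((\<lambda>h. h i) -` U))" "open (Rep_cf -` ((\<lambda>h. h i) -` V))"
    by (auto intro: open_Rep_vimage)
  then show "\<exists>U V. open U \<and> open V \<and> f \<in> U \<and> g \<in> V \<and> U \<inter> V = {}"
    using UV by (intro exI[of _ "Rep_cf -` ((\<lambda>h. h i) -` U)"] exI[of _ "Rep_cf -` ((\<lambda>h. h i) -` V)"]) auto
qed

lemma cont_eval: "continuous_on S (\<lambda>h::'a \<Rightarrow> 'b::topological_space. h i)"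
  by (rule continuous_on_subset[OF continuous_on_product_coordinates subset_UNIV])

lemma closed_dual_group: "closed (dual_group :: ('x::linordered_ab_group_add \<Rightarrow> complex) set)"
proof -
  have e: "dual_group = (\<Inter>\<xi>. {\<gamma>::'x \<Rightarrow> complex. cmod (\<gamma> \<xi>) = 1}) \<inter>
      (\<Inter>a. \<Inter>b. {\<gamma>::'x \<Rightarrow> complex. \<gamma> (a + b) = \<gamma> a * \<gamma> b})"
    unfolding dual_group_def by auto
  have c1: "closed {\<gamma>::'x \<Rightarrow> complex. cmod (\<gamma> \<xi>) = 1}" for \<xi>
    by (intro closed_Collect_eq continuous_intros cont_eval)
  have c2: "closed {\<gamma>::'x \<Rightarrow> complex. \<gamma> (a + b) = \<gamma> a * \<gamma> b}" for a b
    by (intro closed_Collect_eq continuous_intros cont_eval)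
  show ?thesis unfolding e using c1 c2 by (intro closed_Int closed_INT ballI) auto
qed

lemma compact_dual_group: "compact (dual_group :: ('x::linordered_ab_group_add \<Rightarrow> complex) set)"
proof -
  have "compactin (product_topology (\<lambda>_. euclidean) UNIV) (PiE UNIV (\<lambda>_::'x. sphere (0::complex) 1))"
    by (simp add: compactin_PiE)
  then have c: "compact (PiE UNIV (\<lambda>_::'x. sphere (0::complex) 1))"
    by (simp add: euclidean_product_topology)
  have "dual_group = (PiE UNIV (\<lambda>_::'x. sphere (0::complex) 1)) \<inter> dual_group"
    unfolding dual_group_def by (auto simp: PiE_UNIV_domain)
  then show ?thesis using compact_Int_closed[OF c closed_dual_group] by simp
qed

definition istpG :: "(('x::linordered_ab_group_add \<Rightarrow> complex) \<Rightarrow> complex) \<Rightarrow> bool" where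
  "istpG p \<longleftrightarrow> (\<exists>F c. finite F \<and> (\<forall>x\<in>dual_group. p x = tp F c x))"

lemma istpG_tp: "finite F \<Longrightarrow> istpG (tp F c)"
  unfolding istpG_def by blast

lemma istpG_cong: "istpG p \<Longrightarrow> (\<And>x. x \<in> dual_group \<Longrightarrow> p x = q x) \<Longrightarrow> istpG q"
  unfolding istpG_def by metis

lemma istpG_single: "istpG (\<lambda>\<gamma>. c * \<gamma> \<xi>)"
proof -
  have "istpG (tp {\<xi>} (\<lambda>_. c))" by (rule istpG_tp) simp
  then show ?thesis by (rule istpG_cong) (simp add: tp_def)
qed

lemma istpG_const: "istpG (\<lambda>\<gamma>. c)"
  by (rule istpG_cong[OF istpG_single[of c 0]]) (simp add: dg_0)

lemma tp_extend: "finite H \<Longrightarrow> F \<subseteq> H \<Longrightarrow> tp F c x = tp H (\<lambda>\<xi>. if \<xi> \<in> F then c \<xi> else 0) x"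
  unfolding tp_def by (rule sum.mono_neutral_cong_left) auto

lemma istpG_add: "istpG p \<Longrightarrow> istpG q \<Longrightarrow> istpG (\<lambda>x. p x + q x)"
proof -
  assume "istpG p" "istpG q"
  then obtain F c G d where FG: "finite F" "finite G" "\<forall>x\<in>dual_group. p x = tp F c x"
    "\<forall>x\<in>dual_group. q x = tp G d x" unfolding istpG_def by blast
  let ?c = "\<lambda>\<xi>. if \<xi> \<in> F then c \<xi> else 0" and ?d = "\<lambda>\<xi>. if \<xi> \<in> G then d \<xi> else 0"
  have "istpG (tp (F \<union> G) (\<lambda>\<xi>. ?c \<xi> + ?d \<xi>))" using FG by (intro istpG_tp) auto
  moreover have "tp (F \<union> G) (\<lambda>\<xi>. ?c \<xi> + ?d \<xi>) x = p x + q x" if "x \<in> dual_group" for x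
    using FG that tp_extend[of "F \<union> G" F c x] tp_extend[of "F \<union> G" G d x]
    by (simp add: tp_def sum.distrib distrib_right)
  ultimately show ?thesis by (rule istpG_cong)
qed

lemma istpG_sum: "finite I \<Longrightarrow> (\<And>i. i \<in> I \<Longrightarrow> istpG (f i)) \<Longrightarrow> istpG (\<lambda>x. \<Sum>i\<in>I. f i x)"
  by (induction I rule: finite_induct) (auto intro: istpG_add istpG_const)

lemma istpG_expand: "istpG p \<Longrightarrow> \<exists>F c. finite F \<and> (\<forall>x\<in>dual_group. p x = (\<Sum>\<xi>\<in>F. c \<xi> * x \<xi>))"
  unfolding istpG_def tp_def by blast

lemma istpG_mult: "istpG p \<Longrightarrow> istpG q \<Longrightarrow> istpG (\<lambda>x. p x * q x)"
proof -
  assume pq: "istpG p" "istpG q"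
  obtain F c where F: "finite F" "\<forall>x\<in>dual_group. p x = (\<Sum>\<xi>\<in>F. c \<xi> * x \<xi>)"
    using istpG_expand[OF pq(1)] by blast
  obtain G d where G: "finite G" "\<forall>x\<in>dual_group. q x = (\<Sum>\<eta>\<in>G. d \<eta> * x \<eta>)"
    using istpG_expand[OF pq(2)] by blast
  note FG = F(1) G(1) F(2) G(2)
  have "istpG (\<lambda>x. \<Sum>\<xi>\<in>F. \<Sum>\<eta>\<in>G. (c \<xi> * d \<eta>) * x (\<xi> + \<eta>))"
    using FG by (intro istpG_sum istpG_single) auto
  moreover have "(\<Sum>\<xi>\<in>F. \<Sum>\<eta>\<in>G. (c \<xi> * d \<eta>) * x (\<xi> + \<eta>)) = p x * q x" if "x \<in> dual_group" for x
  proof -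
    have "p x * q x = (\<Sum>\<xi>\<in>F. \<Sum>\<eta>\<in>G. (c \<xi> * x \<xi>) * (d \<eta> * x \<eta>))"
      using FG that by (simp add: sum_product)
    also have "\<dots> = (\<Sum>\<xi>\<in>F. \<Sum>\<eta>\<in>G. (c \<xi> * d \<eta>) * x (\<xi> + \<eta>))"
      using that by (simp add: dg_add mult_ac)
    finally show ?thesis by simp
  qed
  ultimately show ?thesis by (rule istpG_cong)
qed

lemma istpG_cnj: "istpG p \<Longrightarrow> istpG (\<lambda>x. cnj (p x))"
proof -
  assume p: "istpG p"
  obtain F c where F: "finite F" "\<forall>x\<in>dual_group. p x = (\<Sum>\<xi>\<in>F. c \<xi> * x \<xi>)"
    using istpG_expand[OF p] by blast
  have "istpG (\<lambda>x. \<Sum>\<xi>\<in>F. cnj (c \<xi>) * x (- \<xi>))" using F by (intro istpG_sum istpG_single)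
  moreover have "(\<Sum>\<xi>\<in>F. cnj (c \<xi>) * x (- \<xi>)) = cnj (p x)" if "x \<in> dual_group" for x
    using F that by (simp add: dg_minus)
  ultimately show ?thesis by (rule istpG_cong)
qed

lemma istpG_scale: "istpG p \<Longrightarrow> istpG (\<lambda>x. c * p x)"
  using istpG_mult[OF istpG_const] .

lemma istpG_diff: "istpG p \<Longrightarrow> istpG q \<Longrightarrow> istpG (\<lambda>x. p x - q x)"
  using istpG_add[of p "\<lambda>x. (-1) * q x"] istpG_scale[of q "-1"] by simp

lemma istpG_Re: "istpG p \<Longrightarrow> istpG (\<lambda>x. complex_of_real (Re (p x)))"
proof -
  assume p: "istpG p"
  have "istpG (\<lambda>x. (1/2) * (p x + cnj (p x)))" by (intro istpG_scale istpG_add p istpG_cnj)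
  then show ?thesis by (rule istpG_cong) (simp add: complex_add_cnj)
qed

lemma istpG_cont: "istpG p \<Longrightarrow> continuous_on dual_group p"
proof -
  assume p: "istpG p"
  obtain F c where F: "finite F" "\<forall>x\<in>dual_group. p x = (\<Sum>\<xi>\<in>F. c \<xi> * x \<xi>)"
    using istpG_expand[OF p] by blast
  have "continuous_on dual_group (\<lambda>x::'a \<Rightarrow> complex. \<Sum>\<xi>\<in>F. c \<xi> * x \<xi>)"
    by (intro continuous_intros cont_eval)
  then show ?thesis using F(2) continuous_on_cong by force
qed

lemma SW_dual:
  fixes f :: "('x::linordered_ab_group_add \<Rightarrow> complex) \<Rightarrow> real"
  assumes f: "continuous_on dual_group f" and e: "0 < e"
  shows "\<exists>p. istpG p \<and> (\<forall>x\<in>dual_group. \<bar>f x - Re (p x)\<bar> < e)"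
proof -
  define S where "S = Abs_cf ` (dual_group :: ('x \<Rightarrow> complex) set)"
  have SG: "Rep_cf ` S = dual_group" unfolding S_def by (simp add: image_image)
  have xS: "x \<in> S \<Longrightarrow> Rep_cf x \<in> dual_group" for x unfolding S_def by auto
  define P where "P g \<longleftrightarrow> (\<exists>p. istpG p \<and> (\<forall>x\<in>S. g x = Re (p (Rep_cf x))))"
    for g :: "'x cf \<Rightarrow> real"
  have cS: "compact S" unfolding S_def
    by (rule compact_continuous_image[OF cont_Abs_cf compact_dual_group])
  have cf: "continuous_on S (\<lambda>x. f (Rep_cf x))"
    by (rule continuous_on_compose2[OF f cont_Rep_cf]) (use xS in auto)
  have "\<exists>g. P g \<and> (\<forall>x\<in>S. \<bar>f (Rep_cf x) - g x\<bar> < e)"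
  proof (rule Stone_Weierstrass_HOL[OF cS])
    show "P (\<lambda>x. c)" for c unfolding P_def using istpG_const[of "complex_of_real c"] by force
  next
    fix g assume "P g"
    then obtain p where p: "istpG p" "\<forall>x\<in>S. g x = Re (p (Rep_cf x))" unfolding P_def by blast
    have "continuous_on S (\<lambda>x. Re (p (Rep_cf x)))"
      by (intro continuous_intros continuous_on_compose2[OF istpG_cont[OF p(1)] cont_Rep_cf])
         (use xS in auto)
    then show "continuous_on S g" using p(2) continuous_on_cong by force
  next
    fix g h assume "P g \<and> P h"
    then obtain p q where pq: "istpG p" "\<forall>x\<in>S. g x = Re (p (Rep_cf x))"
      "istpG q" "\<forall>x\<in>S. h x = Re (q (Rep_cf x))" unfolding P_def by blast
    show "P (\<lambda>x. g x + h x)" unfolding P_def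
      using pq by (intro exI[of _ "\<lambda>x. p x + q x"]) (auto intro: istpG_add)
    have "istpG (\<lambda>x. (1/2) * (p x * q x + p x * cnj (q x)))"
      by (intro istpG_scale istpG_add istpG_mult istpG_cnj pq)
    moreover have "g x * h x = Re ((1/2) * (p (Rep_cf x) * q (Rep_cf x) + p (Rep_cf x) * cnj (q (Rep_cf x))))"
      if "x \<in> S" for x
      using pq that by (simp add: field_simps)
    ultimately show "P (\<lambda>x. g x * h x)" unfolding P_def by blast
  next
    fix x y :: "'x cf" assume "x \<in> S \<and> y \<in> S \<and> x \<noteq> y"
    then have "Rep_cf x \<noteq> Rep_cf y" by (simp add: Rep_cf_inject)
    then obtain \<xi> where "Rep_cf x \<xi> \<noteq> Rep_cf y \<xi>" by auto
    then have "Re (Rep_cf x \<xi>) \<noteq> Re (Rep_cf y \<xi>) \<or> Re (- \<i> * Rep_cf x \<xi>) \<noteq> Re (- \<i> * Rep_cf y \<xi>)"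
      by (simp add: complex_eq_iff)
    then show "\<exists>g. P g \<and> g x \<noteq> g y"
    proof
      assume "Re (Rep_cf x \<xi>) \<noteq> Re (Rep_cf y \<xi>)"
      then show ?thesis unfolding P_def using istpG_single[of 1 \<xi>]
        by (intro exI[of _ "\<lambda>u. Re (Rep_cf u \<xi>)"]) force
    next
      assume "Re (- \<i> * Rep_cf x \<xi>) \<noteq> Re (- \<i> * Rep_cf y \<xi>)"
      then show ?thesis unfolding P_def using istpG_single[of "- \<i>" \<xi>]
        by (intro exI[of _ "\<lambda>u. Re (- \<i> * Rep_cf u \<xi>)"]) force
    qed
  qed (use cf e in auto)
  then obtain g p where gp: "istpG p" "\<forall>x\<in>S. g x = Re (p (Rep_cf x))"
    "\<forall>x\<in>S. \<bar>f (Rep_cf x) - g x\<bar> < e" unfolding P_def by blast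
  have "\<bar>f x - Re (p x)\<bar> < e" if "x \<in> dual_group" for x
  proof -
    have "Abs_cf x \<in> S" using that unfolding S_def by auto
    then show ?thesis using gp by force
  qed
  then show ?thesis using gp(1) by blast
qed


context haarG
begin

lemma bm_N2_int: "bm f \<Longrightarrow> integrable \<mu> (\<lambda>x. (cmod (f x))\<^sup>2)"
proof -
  assume f: "bm f"
  then obtain C where C: "0 \<le> C" "\<forall>x\<in>space \<mu>. cmod (f x) \<le> C" using bm_bound by blast
  show ?thesis
  proof (rule integrable_const_bound[where B="C\<^sup>2"])
    show "AE x in \<mu>. norm ((cmod (f x))\<^sup>2) \<le> C\<^sup>2"
      using C by (intro AE_I2) (auto intro: power_mono)
    show "(\<lambda>x. (cmod (f x))\<^sup>2) \<in> borel_measurable \<mu>" using bm_meas[OF f] by measurable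
  qed
qed

lemma N2_cong: "(\<And>x. x \<in> space \<mu> \<Longrightarrow> f x = g x) \<Longrightarrow> N2 f = N2 g"
  unfolding N2_def by (intro Bochner_Integration.integral_cong) auto

lemma N2_mono: "bm f \<Longrightarrow> bm g \<Longrightarrow> (\<And>x. x \<in> space \<mu> \<Longrightarrow> cmod (f x) \<le> cmod (g x)) \<Longrightarrow> N2 f \<le> N2 g"
  unfolding N2_def by (intro integral_mono bm_N2_int power_mono) auto

lemma N2_bound: "(\<And>x. x \<in> space \<mu> \<Longrightarrow> cmod (f x) \<le> B) \<Longrightarrow> N2 f \<le> B\<^sup>2"
proof -
  assume b: "\<And>x. x \<in> space \<mu> \<Longrightarrow> cmod (f x) \<le> B"
  have "N2 f \<le> integral\<^sup>L \<mu> (\<lambda>x. B\<^sup>2)"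
    unfolding N2_def
  proof (rule integral_mono_AE')
    show "integrable \<mu> (\<lambda>x. B\<^sup>2)" by simp
    show "AE x in \<mu>. (cmod (f x))\<^sup>2 \<le> B\<^sup>2" using b by (intro AE_I2) (auto intro: power_mono)
    show "AE x in \<mu>. 0 \<le> B\<^sup>2" by simp
  qed
  then show ?thesis by (simp add: prob_space)
qed

lemma N2_add_le: "bm f \<Longrightarrow> bm g \<Longrightarrow> N2 (\<lambda>x. f x + g x) \<le> 2 * N2 f + 2 * N2 g"
proof -
  assume f: "bm f" and g: "bm g"
  have pt: "(cmod (a + b))\<^sup>2 \<le> 2 * (cmod a)\<^sup>2 + 2 * (cmod b)\<^sup>2" for a b :: complex
  proof -
    have "(cmod (a + b))\<^sup>2 \<le> (cmod a + cmod b)\<^sup>2"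
      by (intro power_mono norm_triangle_ineq) auto
    also have "\<dots> \<le> 2 * (cmod a)\<^sup>2 + 2 * (cmod b)\<^sup>2"
      using sum_squares_bound[of "cmod a" "cmod b"] by (simp add: power2_eq_square algebra_simps)
    finally show ?thesis .
  qed
  have "N2 (\<lambda>x. f x + g x) \<le> integral\<^sup>L \<mu> (\<lambda>x. 2 * (cmod (f x))\<^sup>2 + 2 * (cmod (g x))\<^sup>2)"
  proof -
    have i: "integrable \<mu> (\<lambda>x. 2 * (cmod (f x))\<^sup>2 + 2 * (cmod (g x))\<^sup>2)"
      using bm_N2_int[OF f] bm_N2_int[OF g] by simp
    show ?thesis unfolding N2_def using pt i by (intro integral_mono bm_N2_int bm_add f g) auto
  qed
  also have "\<dots> = 2 * N2 f + 2 * N2 g"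
    unfolding N2_def using f g by (simp add: bm_N2_int)
  finally show ?thesis .
qed

lemma N2_scale: "N2 (\<lambda>x. c * f x) = (cmod c)\<^sup>2 * N2 f"
  unfolding N2_def by (simp add: norm_mult power_mult_distrib)

lemma N2_minus_sym: "N2 (\<lambda>x. f x - g x) = N2 (\<lambda>x. g x - f x)"
  unfolding N2_def by (simp add: norm_minus_commute)

lemma istpG_bm: "istpG p \<Longrightarrow> bm p"
proof -
  assume "istpG p"
  then obtain F c where "finite F" "\<forall>x\<in>dual_group. p x = tp F c x" unfolding istpG_def by blast
  then show ?thesis using bm_cong[OF bm_tp[of F c]] spG by auto
qed

definition app :: "(('x \<Rightarrow> complex) \<Rightarrow> complex) \<Rightarrow> bool" where
  "app f \<longleftrightarrow> bm f \<and> (\<forall>e>0. \<exists>p. istpG p \<and> N2 (\<lambda>x. f x - p x) < e)"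

lemma app_istpG: "istpG p \<Longrightarrow> app p"
  unfolding app_def using istpG_bm by (auto intro!: exI[of _ p] simp: N2_def)

lemma app_add: "app f \<Longrightarrow> app g \<Longrightarrow> app (\<lambda>x. f x + g x)"
proof -
  assume f: "app f" and g: "app g"
  have "\<exists>p. istpG p \<and> N2 (\<lambda>x. (f x + g x) - p x) < e" if e: "e > 0" for e
  proof -
    obtain p q where pq: "istpG p" "N2 (\<lambda>x. f x - p x) < e/4" "istpG q" "N2 (\<lambda>x. g x - q x) < e/4"
      using f g e unfolding app_def by (meson divide_pos_pos zero_less_numeral)
    have "N2 (\<lambda>x. (f x + g x) - (p x + q x)) = N2 (\<lambda>x. (f x - p x) + (g x - q x))"
      by (simp add: algebra_simps)
    also have "\<dots> \<le> 2 * N2 (\<lambda>x. f x - p x) + 2 * N2 (\<lambda>x. g x - q x)"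
      using f g unfolding app_def
      by (intro N2_add_le bm_diff istpG_bm[OF pq(1)] istpG_bm[OF pq(3)]) auto
    also have "\<dots> < e" using pq by simp
    finally show ?thesis using pq by (intro exI[of _ "\<lambda>x. p x + q x"]) (auto intro: istpG_add)
  qed
  then show ?thesis using f g unfolding app_def by (auto intro: bm_add)
qed

lemma app_scale: "app f \<Longrightarrow> app (\<lambda>x. c * f x)"
proof (cases "c = 0")
  case True
  then show ?thesis using app_istpG[OF istpG_const[of 0]] by simp
next
  case False
  assume f: "app f"
  have "\<exists>p. istpG p \<and> N2 (\<lambda>x. c * f x - p x) < e" if e: "e > 0" for e
  proof -
    have "e / (cmod c)\<^sup>2 > 0" using e False by simp
    then obtain p where p: "istpG p" "N2 (\<lambda>x. f x - p x) < e / (cmod c)\<^sup>2"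
      using f unfolding app_def by blast
    have "N2 (\<lambda>x. c * f x - c * p x) = (cmod c)\<^sup>2 * N2 (\<lambda>x. f x - p x)"
      using N2_scale[of c "\<lambda>x. f x - p x"] by (simp add: algebra_simps)
    also have "\<dots> < e" using p(2) False by (simp add: field_simps)
    finally show ?thesis using p by (intro exI[of _ "\<lambda>x. c * p x"]) (auto intro: istpG_scale)
  qed
  then show ?thesis using f unfolding app_def by (auto intro: bm_mult bm_const)
qed

lemma app_diff: "app f \<Longrightarrow> app g \<Longrightarrow> app (\<lambda>x. f x - g x)"
  using app_add[of f "\<lambda>x. (-1) * g x"] app_scale[of g "-1"] by simp

lemma app_zero: "app (\<lambda>x. 0)"
  using app_istpG[OF istpG_const[of 0]] .

lemma app_const: "app (\<lambda>x. c)"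
  using app_istpG[OF istpG_const[of c]] .

lemma app_sum: "finite I \<Longrightarrow> (\<And>i. i \<in> I \<Longrightarrow> app (f i)) \<Longrightarrow> app (\<lambda>x. \<Sum>i\<in>I. f i x)"
  by (induction I rule: finite_induct) (auto intro: app_add app_zero)

lemma app_cong: "app f \<Longrightarrow> (\<And>x. x \<in> space \<mu> \<Longrightarrow> f x = g x) \<Longrightarrow> app g"
proof -
  assume f: "app f" and eq: "\<And>x. x \<in> space \<mu> \<Longrightarrow> f x = g x"
  have "N2 (\<lambda>x. g x - p x) = N2 (\<lambda>x. f x - p x)" for p using eq by (intro N2_cong) auto
  then show ?thesis using f bm_cong[of f g] eq unfolding app_def by auto
qed

lemma app_limit:
  assumes f: "bm f" and lim: "\<And>e. e > 0 \<Longrightarrow> \<exists>g. app g \<and> N2 (\<lambda>x. f x - g x) < e"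
  shows "app f"
proof -
  have "\<exists>p. istpG p \<and> N2 (\<lambda>x. f x - p x) < e" if e: "e > 0" for e
  proof -
    obtain g where g: "app g" "N2 (\<lambda>x. f x - g x) < e/4" using lim[of "e/4"] e by auto
    have "e/4 > 0" using e by simp
    then obtain p where p: "istpG p" "N2 (\<lambda>x. g x - p x) < e/4" using g(1) unfolding app_def by blast
    have "N2 (\<lambda>x. f x - p x) = N2 (\<lambda>x. (f x - g x) + (g x - p x))" by simp
    also have "\<dots> \<le> 2 * N2 (\<lambda>x. f x - g x) + 2 * N2 (\<lambda>x. g x - p x)"
      using f g unfolding app_def by (intro N2_add_le bm_diff istpG_bm[OF p(1)]) auto
    also have "\<dots> < e" using g p by simp
    finally show ?thesis using p by blast
  qed
  then show ?thesis using f unfolding app_def by auto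
qed

end


definition cyl :: "'x set \<Rightarrow> ('x \<Rightarrow> complex set) \<Rightarrow> ('x::linordered_ab_group_add \<Rightarrow> complex) set" where
  "cyl F U = {\<gamma> \<in> dual_group. \<forall>\<xi>\<in>F. \<gamma> \<xi> \<in> U \<xi>}"

definition CYL :: "('x::linordered_ab_group_add \<Rightarrow> complex) set set" where
  "CYL = {cyl F U | F U. finite F \<and> (\<forall>\<xi>\<in>F. open (U \<xi>))}"

lemma CYL_Pow: "CYL \<subseteq> Pow dual_group"
  unfolding CYL_def cyl_def by auto

lemma CYL_Int_stable: "Int_stable (CYL :: ('x::linordered_ab_group_add \<Rightarrow> complex) set set)"
  unfolding Int_stable_def
proof (intro ballI)
  fix a b :: "('x \<Rightarrow> complex) set" assume "a \<in> CYL" "b \<in> CYL"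
  then obtain F U G V where FG: "a = cyl F U" "b = cyl G V" "finite F" "finite G"
    "\<forall>\<xi>\<in>F. open (U \<xi>)" "\<forall>\<xi>\<in>G. open (V \<xi>)" unfolding CYL_def by blast
  define W where "W \<xi> = (if \<xi> \<in> F then U \<xi> else UNIV) \<inter> (if \<xi> \<in> G then V \<xi> else UNIV)" for \<xi> :: 'x
  have "a \<inter> b = cyl (F \<union> G) W" unfolding FG cyl_def W_def by auto
  moreover have "\<forall>\<xi>\<in>F \<union> G. open (W \<xi>)" unfolding W_def using FG by auto
  ultimately show "a \<inter> b \<in> CYL" unfolding CYL_def using FG by blast
qed

context haarG
begin

lemma cyl_sets: "finite F \<Longrightarrow> (\<forall>\<xi>\<in>F. open (U \<xi>)) \<Longrightarrow> cyl F U \<in> sets \<mu>"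
proof -
  assume F: "finite F" "\<forall>\<xi>\<in>F. open (U \<xi>)"
  have "cyl F U = {\<gamma> \<in> space \<mu>. \<forall>\<xi>\<in>F. \<gamma> \<xi> \<in> U \<xi>}" unfolding cyl_def spG ..
  also have "\<dots> \<in> sets \<mu>"
  proof (rule sets.sets_Collect_finite_All[OF _ F(1)])
    fix \<xi> assume "\<xi> \<in> F"
    then have "U \<xi> \<in> sets borel" using F by auto
    from measurable_sets[OF meas_char this] show "{\<gamma> \<in> space \<mu>. \<gamma> \<xi> \<in> U \<xi>} \<in> sets \<mu>"
      by (simp add: vimage_def Int_def conj_commute)
  qed
  finally show ?thesis .
qed

lemma CYL_sets: "CYL \<subseteq> sets \<mu>"
  unfolding CYL_def using cyl_sets by blast

lemma sets_sub_CYL: "sets \<mu> \<subseteq> sigma_sets dual_group CYL"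
proof -
  let ?M = "sigma dual_group CYL"
  have spM: "space ?M = dual_group" and sM: "sets ?M = sigma_sets dual_group CYL"
    using space_measure_of[OF CYL_Pow] sets_measure_of[OF CYL_Pow] by auto
  have "GEN \<subseteq> sigma_sets dual_group CYL"
  proof
    fix y assume "y \<in> GEN"
    then obtain \<xi> A where y: "y = {\<gamma> \<in> dual_group. \<gamma> \<xi> \<in> A}" "A \<in> sets borel" by blast
    have "(\<lambda>\<gamma>. \<gamma> \<xi>) \<in> borel_measurable ?M"
    proof (rule borel_measurableI)
      fix S :: "complex set" assume "open S"
      have "(\<lambda>\<gamma>. \<gamma> \<xi>) -` S \<inter> space ?M = cyl {\<xi>} (\<lambda>_. S)" unfolding spM cyl_def by auto
      also have "\<dots> \<in> CYL" unfolding CYL_def using \<open>open S\<close> by blast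
      finally show "(\<lambda>\<gamma>. \<gamma> \<xi>) -` S \<inter> space ?M \<in> sets ?M" unfolding sM by auto
    qed
    from measurable_sets[OF this y(2)] show "y \<in> sigma_sets dual_group CYL"
      unfolding y(1) sM spM by (simp add: vimage_def Int_def conj_commute)
  qed
  then show ?thesis unfolding setsG by (rule sigma_sets_mono)
qed

lemma CYL_sub_sets: "sigma_sets dual_group CYL \<subseteq> sets \<mu>"
  using sets.sigma_sets_subset[OF CYL_sets] spG by simp

lemma bm_indicator: "A \<in> sets \<mu> \<Longrightarrow> bm (\<lambda>x. indicator A x :: complex)"
  unfolding bm_def by (auto intro!: exI[of _ 1] simp: indicator_def)

lemma app_cyl:
  assumes F: "finite F" "\<forall>\<xi>\<in>F. open (U \<xi>)"
  shows "app (\<lambda>x. indicator (cyl F U) x :: complex)"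
proof -
  let ?S = "cyl F U"
  have S: "?S \<in> sets \<mu>" using cyl_sets[OF F] .
  define \<phi> :: "nat \<Rightarrow> 'x \<Rightarrow> complex \<Rightarrow> real" where
    "\<phi> m \<xi> z = (if U \<xi> = UNIV then 1 else min 1 (real m * infdist z (- U \<xi>)))" for m \<xi> z
  define \<Phi> where "\<Phi> m \<gamma> = (\<Prod>\<xi>\<in>F. \<phi> m \<xi> (\<gamma> \<xi>))" for m \<gamma>
  have \<phi>r: "0 \<le> \<phi> m \<xi> z \<and> \<phi> m \<xi> z \<le> 1" for m \<xi> z
    unfolding \<phi>_def by (auto simp: infdist_nonneg)
  have \<Phi>r: "0 \<le> \<Phi> m \<gamma> \<and> \<Phi> m \<gamma> \<le> 1" for m \<gamma>
    unfolding \<Phi>_def using \<phi>r by (auto intro: prod_nonneg prod_le_1)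
  have \<phi>c: "continuous_on UNIV (\<phi> m \<xi>)" for m \<xi>
    unfolding \<phi>_def by (cases "U \<xi> = UNIV") (auto intro!: continuous_intros)
  have \<Phi>c: "continuous_on dual_group (\<Phi> m)" for m
    unfolding \<Phi>_def
    by (intro continuous_on_prod continuous_on_compose2[OF \<phi>c cont_eval]) auto
  have \<Phi>m: "\<Phi> m \<in> borel_measurable \<mu>" for m
    unfolding \<Phi>_def
    by (intro borel_measurable_prod borel_measurable_continuous_on[OF \<phi>c meas_char])
  have \<Phi>bm: "bm (\<lambda>x. complex_of_real (\<Phi> m x))" for m
    unfolding bm_def using \<Phi>m \<Phi>r by (auto intro!: exI[of _ 1])
  have \<phi>lim: "(\<lambda>m. \<phi> m \<xi> z) \<longlonglongrightarrow> (if z \<in> U \<xi> then 1 else 0)" if "\<xi> \<in> F" for \<xi> z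
  proof (cases "U \<xi> = UNIV")
    case True then show ?thesis unfolding \<phi>_def by simp
  next
    case nU: False
    show ?thesis
    proof (cases "z \<in> U \<xi>")
      case False
      then have "\<phi> m \<xi> z = 0" for m unfolding \<phi>_def using nU by simp
      then show ?thesis using False by simp
    next
      case True
      have op: "open (U \<xi>)" using F that by auto
      have d: "infdist z (- U \<xi>) > 0"
        using True nU op by (intro infdist_pos_not_in_closed) auto
      obtain N :: nat where N: "1 / infdist z (- U \<xi>) < real N" using reals_Archimedean2 by blast
      have "\<forall>\<^sub>F m in sequentially. \<phi> m \<xi> z = 1"
      proof (rule eventually_sequentiallyI[of N])
        fix m assume "N \<le> m"
        then have "1 / infdist z (- U \<xi>) < real m" using N by linarith
        then have "1 \<le> real m * infdist z (- U \<xi>)" using d by (simp add: field_simps)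
        then show "\<phi> m \<xi> z = 1" unfolding \<phi>_def using nU by simp
      qed
      then show ?thesis using True by (simp add: tendsto_eventually)
    qed
  qed
  have \<Phi>lim: "(\<lambda>m. \<Phi> m \<gamma>) \<longlonglongrightarrow> indicator ?S \<gamma>" if "\<gamma> \<in> dual_group" for \<gamma>
  proof -
    have "(\<lambda>m. \<Phi> m \<gamma>) \<longlonglongrightarrow> (\<Prod>\<xi>\<in>F. if \<gamma> \<xi> \<in> U \<xi> then 1 else 0)"
      unfolding \<Phi>_def by (intro tendsto_prod \<phi>lim)
    moreover have "(\<Prod>\<xi>\<in>F. if \<gamma> \<xi> \<in> U \<xi> then 1 else (0::real)) = indicator ?S \<gamma>"
    proof (cases "\<forall>\<xi>\<in>F. \<gamma> \<xi> \<in> U \<xi>")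
      case True then show ?thesis using that by (simp add: cyl_def)
    next
      case False
      then obtain \<xi> where \<xi>: "\<xi> \<in> F" "\<gamma> \<xi> \<notin> U \<xi>" by blast
      have "(\<Prod>\<xi>\<in>F. if \<gamma> \<xi> \<in> U \<xi> then 1 else (0::real)) = 0"
        using F(1) \<xi> by (subst prod_zero_iff) auto
      moreover have "indicator ?S \<gamma> = (0::real)" using \<xi> by (auto simp: cyl_def indicator_def)
      ultimately show ?thesis by simp
    qed
    ultimately show ?thesis by simp
  qed
  have N2lim: "(\<lambda>m. N2 (\<lambda>x. indicator ?S x - complex_of_real (\<Phi> m x))) \<longlonglongrightarrow> 0"
  proof -
    have "(\<lambda>m. integral\<^sup>L \<mu> (\<lambda>x. (cmod (indicator ?S x - complex_of_real (\<Phi> m x)))\<^sup>2))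
        \<longlonglongrightarrow> integral\<^sup>L \<mu> (\<lambda>x. 0::real)"
    proof (rule integral_dominated_convergence[where w="\<lambda>x. 1"])
      show "(\<lambda>x. 0::real) \<in> borel_measurable \<mu>" by simp
      show "(\<lambda>x. (cmod (indicator ?S x - complex_of_real (\<Phi> m x)))\<^sup>2) \<in> borel_measurable \<mu>" for m
        using \<Phi>m[of m] S by measurable
      show "integrable \<mu> (\<lambda>x. 1::real)" by simp
      show "AE x in \<mu>. (\<lambda>m. (cmod (indicator ?S x - complex_of_real (\<Phi> m x)))\<^sup>2) \<longlonglongrightarrow> 0"
      proof (rule AE_I2)
        fix x assume x: "x \<in> space \<mu>"
        have "(\<lambda>m. (cmod (indicator ?S x - complex_of_real (\<Phi> m x)))\<^sup>2) \<longlonglongrightarrow>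
            (cmod (indicator ?S x - complex_of_real (indicator ?S x)))\<^sup>2"
          using x spG by (intro tendsto_intros \<Phi>lim) auto
        moreover have z: "(cmod (indicator ?S x - complex_of_real (indicator ?S x)))\<^sup>2 = (0::real)"
          by (simp add: indicator_def)
        ultimately show "(\<lambda>m. (cmod (indicator ?S x - complex_of_real (\<Phi> m x)))\<^sup>2) \<longlonglongrightarrow> 0"
          by simp
      qed
      show "AE x in \<mu>. norm ((cmod (indicator ?S x - complex_of_real (\<Phi> m x)))\<^sup>2) \<le> 1" for m
      proof (rule AE_I2)
        fix x
        have e1: "indicator ?S x - complex_of_real (\<Phi> m x) = complex_of_real (indicator ?S x - \<Phi> m x)"
          by (simp add: indicator_def)
        have e2: "\<bar>indicator ?S x - \<Phi> m x\<bar> \<le> (1::real)" using \<Phi>r[of m x] by (auto simp: indicator_def)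
        have "cmod (indicator ?S x - complex_of_real (\<Phi> m x)) \<le> 1"
          unfolding e1 norm_of_real using e2 .
        then show "norm ((cmod (indicator ?S x - complex_of_real (\<Phi> m x)))\<^sup>2) \<le> 1"
          by (simp add: abs_le_square_iff power_le_one)
      qed
    qed
    then show ?thesis unfolding N2_def by simp
  qed
  have "\<exists>p. istpG p \<and> N2 (\<lambda>x. indicator ?S x - p x) < e" if e: "e > 0" for e
  proof -
    obtain m where m: "N2 (\<lambda>x. indicator ?S x - complex_of_real (\<Phi> m x)) < e/4"
    proof -
      have e4: "e/4 > 0" using e by simp
      have "\<forall>\<^sub>F m in sequentially. dist (N2 (\<lambda>x. indicator ?S x - complex_of_real (\<Phi> m x))) 0 < e/4"
        using N2lim e4 unfolding tendsto_iff by blast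
      then obtain m where "dist (N2 (\<lambda>x. indicator ?S x - complex_of_real (\<Phi> m x))) 0 < e/4"
        unfolding eventually_sequentially by blast
      then show ?thesis using that by (simp add: dist_real_def N2_nonneg)
    qed
    have d: "sqrt (e/8) > 0" using e by simp
    obtain p where p: "istpG p" "\<forall>x\<in>dual_group. \<bar>\<Phi> m x - Re (p x)\<bar> < sqrt (e/8)"
      using SW_dual[OF \<Phi>c d] by blast
    let ?q = "\<lambda>x. complex_of_real (Re (p x))"
    have q: "istpG ?q" using istpG_Re[OF p(1)] .
    have "N2 (\<lambda>x. complex_of_real (\<Phi> m x) - ?q x) \<le> (sqrt (e/8))\<^sup>2"
    proof (rule N2_bound)
      fix x assume "x \<in> space \<mu>"
      then have "\<bar>\<Phi> m x - Re (p x)\<bar> < sqrt (e/8)" using p spG by auto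
      then show "cmod (complex_of_real (\<Phi> m x) - ?q x) \<le> sqrt (e/8)"
        by (simp add: norm_of_real flip: of_real_diff)
    qed
    then have q2: "N2 (\<lambda>x. complex_of_real (\<Phi> m x) - ?q x) \<le> e/8" using e by simp
    have "N2 (\<lambda>x. indicator ?S x - ?q x)
        = N2 (\<lambda>x. (indicator ?S x - complex_of_real (\<Phi> m x)) + (complex_of_real (\<Phi> m x) - ?q x))"
      by simp
    also have "\<dots> \<le> 2 * N2 (\<lambda>x. indicator ?S x - complex_of_real (\<Phi> m x)) +
        2 * N2 (\<lambda>x. complex_of_real (\<Phi> m x) - ?q x)"
      by (intro N2_add_le bm_diff bm_indicator[OF S] \<Phi>bm istpG_bm[OF q])
    also have "\<dots> < e" using m q2 e by linarith
    finally show ?thesis using q by blast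
  qed
  then show ?thesis unfolding app_def using bm_indicator[OF S] by blast
qed

lemma app_indicator:
  assumes A: "A \<in> sets \<mu>"
  shows "app (\<lambda>x. indicator A x :: complex)"
proof -
  have "A \<in> sigma_sets dual_group CYL" using A sets_sub_CYL by blast
  with CYL_Int_stable CYL_Pow show ?thesis
  proof (induction rule: sigma_sets_induct_disjoint)
    case (basic A)
    then show ?case unfolding CYL_def using app_cyl by blast
  next
    case empty
    then show ?case using app_zero by simp
  next
    case (compl A)
    have "app (\<lambda>x. 1 - indicator A x :: complex)" using compl by (intro app_diff app_const)
    then show ?case
      by (rule app_cong) (auto simp: spG indicator_def)
  next
    case (union A)
    have As: "A i \<in> sets \<mu>" for i using union CYL_sub_sets by blast
    let ?U = "\<Union>i. A i"
    have U: "?U \<in> sets \<mu>" using As by blast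
    define B where "B n = (\<Union>i\<in>{..<n}. A i)" for n
    have Bs: "B n \<in> sets \<mu>" for n unfolding B_def using As by blast
    have BU: "B n \<subseteq> ?U" for n unfolding B_def by blast
    have "(\<lambda>n. measure \<mu> (B n)) \<longlonglongrightarrow> measure \<mu> (\<Union>n. B n)"
    proof (rule finite_Lim_measure_incseq)
      show "range B \<subseteq> sets \<mu>" using Bs by auto
      show "incseq B" by (rule incseq_SucI) (auto simp: B_def lessThan_Suc)
    qed
    moreover have "(\<Union>n. B n) = ?U" unfolding B_def by blast
    ultimately have lim: "(\<lambda>n. measure \<mu> (B n)) \<longlonglongrightarrow> measure \<mu> ?U" by simp
    show ?case
    proof (rule app_limit[OF bm_indicator[OF U]])
      fix e :: real assume e: "e > 0"
      obtain n where n: "measure \<mu> ?U - measure \<mu> (B n) < e"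
      proof -
        have "\<forall>\<^sub>F n in sequentially. dist (measure \<mu> (B n)) (measure \<mu> ?U) < e"
          using lim e unfolding tendsto_iff by simp
        then obtain n where "dist (measure \<mu> (B n)) (measure \<mu> ?U) < e"
          unfolding eventually_sequentially by blast
        then have "measure \<mu> ?U - measure \<mu> (B n) < e" by (simp add: dist_real_def abs_less_iff)
        then show ?thesis by (rule that)
      qed
      have "app (\<lambda>x. \<Sum>i\<in>{..<n}. indicator (A i) x :: complex)"
        using union by (intro app_sum) auto
      moreover have "(\<Sum>i\<in>{..<n}. indicator (A i) x :: complex) = indicator (B n) x" for x
        unfolding B_def using union(1)
        by (subst indicator_UN_disjoint) (auto simp: disjoint_family_on_def disjoint_family_on_mono)
      ultimately have ap: "app (\<lambda>x. indicator (B n) x :: complex)" by simp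
      have "N2 (\<lambda>x. indicator ?U x - indicator (B n) x) = integral\<^sup>L \<mu> (indicator (?U - B n))"
        unfolding N2_def using BU[of n]
        by (intro Bochner_Integration.integral_cong) (auto simp: indicator_def)
      also have "\<dots> = measure \<mu> (?U - B n)" using U Bs by (simp add: Int_absorb2 sets.sets_into_space)
      also have "\<dots> = measure \<mu> ?U - measure \<mu> (B n)"
        using U Bs BU by (intro finite_measure_Diff) auto
      finally have "N2 (\<lambda>x. indicator ?U x - indicator (B n) x) < e" using n by simp
      then show "\<exists>g. app g \<and> N2 (\<lambda>x. indicator ?U x - g x) < e" using ap by blast
    qed
  qed
qed

end


context haarG
begin

lemma app_real:
  fixes g :: "('x \<Rightarrow> complex) \<Rightarrow> real"
  assumes g: "g \<in> borel_measurable \<mu>" and C: "\<And>x. x \<in> space \<mu> \<Longrightarrow> \<bar>g x\<bar> \<le> C"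
  shows "app (\<lambda>x. complex_of_real (g x))"
proof (rule app_limit)
  show bmg: "bm (\<lambda>x. complex_of_real (g x))"
    unfolding bm_def using g C by (auto simp: norm_of_real)
  fix e :: real assume e: "e > 0"
  obtain n :: nat where n: "1 / e < real n" using reals_Archimedean2 by blast
  have npos: "real n > 0" using n e by (smt (verit) divide_pos_pos)
  define M :: int where "M = \<lceil>real n * \<bar>C\<bar>\<rceil> + 1"
  define K where "K = {-M..M}"
  define A where "A k = {x \<in> space \<mu>. \<lfloor>real n * g x\<rfloor> = k}" for k
  have As: "A k \<in> sets \<mu>" for k unfolding A_def using g by measurable
  define s where "s x = (\<Sum>k\<in>K. complex_of_real (real_of_int k / real n) * indicator (A k) x)" for x
  have aps: "app s" unfolding s_def K_def
    by (intro app_sum app_scale app_indicator As) auto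
  have sx: "s x = complex_of_real (real_of_int \<lfloor>real n * g x\<rfloor> / real n)" if x: "x \<in> space \<mu>" for x
  proof -
    let ?k = "\<lfloor>real n * g x\<rfloor>"
    have "\<bar>real n * g x\<bar> \<le> real n * \<bar>C\<bar>"
      using C[OF x] npos by (simp add: abs_mult mult_left_mono)
    then have "\<bar>real_of_int ?k\<bar> \<le> real n * \<bar>C\<bar> + 1" by linarith
    moreover have "real n * \<bar>C\<bar> \<le> real_of_int \<lceil>real n * \<bar>C\<bar>\<rceil>" by (rule le_of_int_ceiling)
    ultimately have "?k \<in> K" unfolding K_def M_def by (simp add: abs_le_iff) linarith
    have "s x = (\<Sum>k\<in>K. if k = ?k then complex_of_real (real_of_int k / real n) else 0)"
      unfolding s_def using x by (intro sum.cong) (auto simp: A_def indicator_def)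
    also have "\<dots> = complex_of_real (real_of_int ?k / real n)"
      using \<open>?k \<in> K\<close> unfolding K_def by (simp add: sum.delta')
    finally show ?thesis .
  qed
  have "N2 (\<lambda>x. complex_of_real (g x) - s x) \<le> (1 / real n)\<^sup>2"
  proof (rule N2_bound)
    fix x assume x: "x \<in> space \<mu>"
    let ?y = "real n * g x"
    have f1: "real_of_int \<lfloor>?y\<rfloor> \<le> ?y" "?y < real_of_int \<lfloor>?y\<rfloor> + 1" by linarith+
    have "g x - real_of_int \<lfloor>?y\<rfloor> / real n = (?y - real_of_int \<lfloor>?y\<rfloor>) / real n"
      using npos by (simp add: field_simps)
    moreover have "0 \<le> ?y - real_of_int \<lfloor>?y\<rfloor>" "?y - real_of_int \<lfloor>?y\<rfloor> \<le> 1" using f1 by linarith+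
    ultimately have "\<bar>g x - real_of_int \<lfloor>?y\<rfloor> / real n\<bar> \<le> 1 / real n"
      using npos by (simp add: divide_right_mono)
    then show "cmod (complex_of_real (g x) - s x) \<le> 1 / real n"
      unfolding sx[OF x] of_real_diff[symmetric] norm_of_real .
  qed
  also have "(1 / real n)\<^sup>2 \<le> 1 / real n"
    using npos n e by (simp add: power2_eq_square divide_le_eq_1 field_simps)
  also have "1 / real n < e" using n e npos by (simp add: field_simps)
  finally show "\<exists>g'. app g' \<and> N2 (\<lambda>x. complex_of_real (g x) - g' x) < e" using aps by blast
qed

lemma app_bm: assumes f: "bm f" shows "app f"
proof -
  obtain C where C: "\<forall>x\<in>space \<mu>. cmod (f x) \<le> C" using f unfolding bm_def by auto
  have mf: "f \<in> borel_measurable \<mu>" using f unfolding bm_def by auto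
  have r: "app (\<lambda>x. complex_of_real (Re (f x)))"
    by (rule app_real[where C=C]) (use mf C in \<open>auto intro: order_trans[OF abs_Re_le_cmod]\<close>)
  have i: "app (\<lambda>x. complex_of_real (Im (f x)))"
    by (rule app_real[where C=C]) (use mf C in \<open>auto intro: order_trans[OF abs_Im_le_cmod]\<close>)
  have "app (\<lambda>x. complex_of_real (Re (f x)) + \<i> * complex_of_real (Im (f x)))"
    by (intro app_add app_scale r i)
  then show ?thesis by (rule app_cong) (simp add: complex_eq_iff)
qed

lemma density: "bm f \<Longrightarrow> e > 0 \<Longrightarrow> \<exists>p. istpG p \<and> N2 (\<lambda>x. f x - p x) < e"
  using app_bm unfolding app_def by blast

lemma parseval_le: assumes f: "bm f" shows "N2 f \<le> sqn (fourier \<mu> f)"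
proof (rule field_le_epsilon)
  fix e :: real assume e: "e > 0"
  obtain p where p: "istpG p" "N2 (\<lambda>x. f x - p x) < e" using density[OF f e] by blast
  obtain F c where Fc: "finite F" "\<forall>x\<in>dual_group. p x = tp F c x" using p(1) unfolding istpG_def by blast
  have "N2 (\<lambda>x. f x - p x) = N2 (\<lambda>x. f x - tp F c x)" using Fc spG by (intro N2_cong) auto
  also have "\<dots> = N2 f - (\<Sum>\<xi>\<in>F. (cmod (fourier \<mu> f \<xi>))\<^sup>2) + (\<Sum>\<xi>\<in>F. (cmod (fourier \<mu> f \<xi> - c \<xi>))\<^sup>2)"
    by (rule N2_tp_approx[OF f Fc(1)])
  finally have "N2 f - (\<Sum>\<xi>\<in>F. (cmod (fourier \<mu> f \<xi>))\<^sup>2) < e"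
    using p(2) sum_nonneg[of F "\<lambda>\<xi>. (cmod (fourier \<mu> f \<xi> - c \<xi>))\<^sup>2"] by simp
  moreover have "(\<Sum>\<xi>\<in>F. (cmod (fourier \<mu> f \<xi>))\<^sup>2) \<le> sqn (fourier \<mu> f)"
    using bessel[OF f] Fc(1) sum_le_sqn by blast
  ultimately show "N2 f \<le> sqn (fourier \<mu> f) + e" by simp
qed

end


lemma has_sum_diff':
  fixes f g :: "'a \<Rightarrow> 'b::topological_ab_group_add"
  assumes f: "(f has_sum a) A" and g: "(g has_sum b) A"
  shows "((\<lambda>x. f x - g x) has_sum (a - b)) A"
proof -
  have "((\<lambda>x. - g x) has_sum (- b)) A" using g by (simp add: has_sum_uminus)
  from has_sum_add[OF f this] show ?thesis by simp
qed

lemma isl2_reindex: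
  fixes a :: "'a::ab_group_add \<Rightarrow> complex"
  shows "isl2 a \<Longrightarrow> isl2 (\<lambda>\<eta>. a (\<xi> - \<eta>)) \<and> sqn (\<lambda>\<eta>. a (\<xi> - \<eta>)) = sqn a"
proof -
  assume a: "isl2 a"
  have b: "bij_betw (\<lambda>\<eta>. \<xi> - \<eta>) UNIV (UNIV :: 'a::ab_group_add set)"
    by (rule bij_betwI[where g="\<lambda>\<eta>. \<xi> - \<eta>"]) auto
  show ?thesis using a unfolding isl2_def sqn_def
    using summable_on_reindex_bij_betw[OF b, of "\<lambda>\<eta>. (cmod (a \<eta>))\<^sup>2"]
      infsum_reindex_bij_betw[OF b, of "\<lambda>\<eta>. (cmod (a \<eta>))\<^sup>2"] by simp
qed

lemma sqn_fin: "finite F \<Longrightarrow> (\<And>\<xi>. \<xi> \<notin> F \<Longrightarrow> x \<xi> = 0) \<Longrightarrow>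
    isl2 x \<and> sqn x = (\<Sum>\<xi>\<in>F. (cmod (x \<xi>))\<^sup>2)"
proof -
  assume F: "finite F" and z: "\<And>\<xi>. \<xi> \<notin> F \<Longrightarrow> x \<xi> = 0"
  have "((\<lambda>\<xi>. (cmod (x \<xi>))\<^sup>2) has_sum (\<Sum>\<xi>\<in>F. (cmod (x \<xi>))\<^sup>2)) UNIV"
    by (rule has_sum_finite_neutralI) (use F z in auto)
  then show ?thesis unfolding isl2_def sqn_def by (auto simp: infsumI summable_on_def)
qed

definition restr :: "'a set \<Rightarrow> ('a \<Rightarrow> complex) \<Rightarrow> 'a \<Rightarrow> complex" where
  "restr F x \<xi> = (if \<xi> \<in> F then x \<xi> else 0)"

lemma restr_sqn: "finite F \<Longrightarrow> isl2 x \<Longrightarrow> isl2 (restr F x) \<and> sqn (restr F x) \<le> sqn x"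
proof -
  assume F: "finite F" and x: "isl2 x"
  have "isl2 (restr F x) \<and> sqn (restr F x) = (\<Sum>\<xi>\<in>F. (cmod (x \<xi>))\<^sup>2)"
    using sqn_fin[OF F, of "restr F x"] by (simp add: restr_def)
  then show ?thesis using sum_le_sqn[OF x F] by simp
qed

lemma restr_tail: "isl2 x \<Longrightarrow> e > 0 \<Longrightarrow> \<exists>F. finite F \<and> isl2 (\<lambda>\<xi>. x \<xi> - restr F x \<xi>) \<and>
   sqn (\<lambda>\<xi>. x \<xi> - restr F x \<xi>) < e"
proof -
  assume "isl2 x" "e > 0"
  from isl2_tail[OF this] obtain F where "finite F" "isl2 (\<lambda>\<xi>. if \<xi> \<in> F then 0 else x \<xi>)"
    "sqn (\<lambda>\<xi>. if \<xi> \<in> F then 0 else x \<xi>) < e" by blast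
  moreover have "(\<lambda>\<xi>. x \<xi> - restr F x \<xi>) = (\<lambda>\<xi>. if \<xi> \<in> F then 0 else x \<xi>)"
    by (auto simp: restr_def)
  ultimately show ?thesis by auto
qed

context haarG
begin

definition conv :: "(('x \<Rightarrow> complex) \<Rightarrow> complex) \<Rightarrow> ('x \<Rightarrow> complex) \<Rightarrow> 'x \<Rightarrow> complex" where
  "conv \<phi> x \<xi> = infsum (\<lambda>\<eta>. fourier \<mu> \<phi> (\<xi> - \<eta>) * x \<eta>) UNIV"

lemma fourier_mult_tp:
  assumes \<phi>: "bm \<phi>" and F: "finite F"
  shows "fourier \<mu> (\<lambda>\<gamma>. \<phi> \<gamma> * tp F c \<gamma>) \<xi> = (\<Sum>\<eta>\<in>F. c \<eta> * fourier \<mu> \<phi> (\<xi> - \<eta>))"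
proof -
  have "fourier \<mu> (\<lambda>\<gamma>. \<phi> \<gamma> * tp F c \<gamma>) \<xi> =
      integral\<^sup>L \<mu> (\<lambda>\<gamma>. \<Sum>\<eta>\<in>F. c \<eta> * (\<phi> \<gamma> * cnj (\<gamma> (\<xi> - \<eta>))))"
    unfolding fourier_def tp_def
  proof (intro Bochner_Integration.integral_cong refl)
    fix \<gamma> assume "\<gamma> \<in> space \<mu>"
    then have g: "\<gamma> \<in> dual_group" using spG by simp
    have "cnj (\<gamma> (\<xi> - \<eta>)) = \<gamma> \<eta> * cnj (\<gamma> \<xi>)" for \<eta>
      using g by (simp add: dg_diff dg_minus[symmetric] mult.commute)
    then show "\<phi> \<gamma> * (\<Sum>\<eta>\<in>F. c \<eta> * \<gamma> \<eta>) * cnj (\<gamma> \<xi>) = (\<Sum>\<eta>\<in>F. c \<eta> * (\<phi> \<gamma> * cnj (\<gamma> (\<xi> - \<eta>))))"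
      by (simp add: sum_distrib_left sum_distrib_right mult_ac)
  qed
  also have "\<dots> = (\<Sum>\<eta>\<in>F. c \<eta> * fourier \<mu> \<phi> (\<xi> - \<eta>))"
    unfolding fourier_def
    by (subst Bochner_Integration.integral_sum) (auto intro!: bm_integrable bm_mult \<phi> bm_cnj bm_char bm_const)
  finally show ?thesis .
qed

lemma bm_fourier_l2: "bm \<phi> \<Longrightarrow> isl2 (fourier \<mu> \<phi>)"
  using bessel by blast

lemma conv_summable:
  assumes \<phi>: "bm \<phi>" and x: "isl2 x"
  shows "(\<lambda>\<eta>. fourier \<mu> \<phi> (\<xi> - \<eta>) * x \<eta>) summable_on UNIV \<and>
    cmod (conv \<phi> x \<xi>) \<le> sqrt (N2 \<phi>) * sqrt (sqn x)"
proof -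
  have a: "isl2 (\<lambda>\<eta>. fourier \<mu> \<phi> (\<xi> - \<eta>))" "sqn (\<lambda>\<eta>. fourier \<mu> \<phi> (\<xi> - \<eta>)) \<le> N2 \<phi>"
    using isl2_reindex[OF bm_fourier_l2[OF \<phi>], of \<xi>] bessel[OF \<phi>] by auto
  have "sqrt (sqn (\<lambda>\<eta>. fourier \<mu> \<phi> (\<xi> - \<eta>))) * sqrt (sqn x) \<le> sqrt (N2 \<phi>) * sqrt (sqn x)"
    using a(2) by (intro mult_right_mono real_sqrt_le_mono) (auto simp: sqn_nonneg)
  with isl2_CS'[OF a(1) x] show ?thesis unfolding conv_def by auto
qed

lemma conv_has_sum: "bm \<phi> \<Longrightarrow> isl2 x \<Longrightarrow>
   ((\<lambda>\<eta>. fourier \<mu> \<phi> (\<xi> - \<eta>) * x \<eta>) has_sum conv \<phi> x \<xi>) UNIV"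
  using conv_summable unfolding conv_def by (blast intro: has_sum_infsum)

lemma conv_fin:
  assumes F: "finite F" and z: "\<And>\<eta>. \<eta> \<notin> F \<Longrightarrow> x \<eta> = 0"
  shows "conv \<phi> x \<xi> = (\<Sum>\<eta>\<in>F. fourier \<mu> \<phi> (\<xi> - \<eta>) * x \<eta>)"
  unfolding conv_def by (rule infsumI, rule has_sum_finite_neutralI) (use F z in auto)

lemma conv_tp: "bm \<phi> \<Longrightarrow> finite F \<Longrightarrow> conv \<phi> (restr F x) \<xi> = fourier \<mu> (\<lambda>\<gamma>. \<phi> \<gamma> * tp F x \<gamma>) \<xi>"
  by (subst conv_fin[of F]) (auto simp: restr_def fourier_mult_tp mult.commute intro!: sum.cong)

lemma conv_diff: "bm \<phi> \<Longrightarrow> isl2 x \<Longrightarrow> isl2 y \<Longrightarrow>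
   conv \<phi> (\<lambda>\<eta>. x \<eta> - y \<eta>) \<xi> = conv \<phi> x \<xi> - conv \<phi> y \<xi>"
proof -
  assume p: "bm \<phi>" "isl2 x" "isl2 y"
  have "((\<lambda>\<eta>. fourier \<mu> \<phi> (\<xi> - \<eta>) * x \<eta> - fourier \<mu> \<phi> (\<xi> - \<eta>) * y \<eta>) has_sum
      (conv \<phi> x \<xi> - conv \<phi> y \<xi>)) UNIV"
    by (intro has_sum_diff' conv_has_sum p)
  then show ?thesis unfolding conv_def by (simp add: infsumI right_diff_distrib)
qed

lemma conv_bound:
  assumes \<phi>: "bm \<phi>" and C: "\<And>\<gamma>. \<gamma> \<in> space \<mu> \<Longrightarrow> cmod (\<phi> \<gamma>) \<le> C" and x: "isl2 x"
  shows "isl2 (conv \<phi> x) \<and> sqn (conv \<phi> x) \<le> C\<^sup>2 * sqn x"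
proof (rule bdd_isl2)
  fix E :: "'x set" assume E: "finite E"
  have fin: "(\<Sum>\<xi>\<in>E. (cmod (conv \<phi> (restr F x) \<xi>))\<^sup>2) \<le> C\<^sup>2 * sqn x" if F: "finite F" for F
  proof -
    have "(\<Sum>\<xi>\<in>E. (cmod (conv \<phi> (restr F x) \<xi>))\<^sup>2) =
        (\<Sum>\<xi>\<in>E. (cmod (fourier \<mu> (\<lambda>\<gamma>. \<phi> \<gamma> * tp F x \<gamma>) \<xi>))\<^sup>2)"
      using conv_tp[OF \<phi> F] by simp
    also have "\<dots> \<le> N2 (\<lambda>\<gamma>. \<phi> \<gamma> * tp F x \<gamma>)"
      by (rule bessel_finite[OF bm_mult[OF \<phi> bm_tp[OF F]] E])
    also have "\<dots> \<le> N2 (\<lambda>\<gamma>. complex_of_real C * tp F x \<gamma>)"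
    proof (rule N2_mono)
      show "bm (\<lambda>\<gamma>. \<phi> \<gamma> * tp F x \<gamma>)" by (rule bm_mult[OF \<phi> bm_tp[OF F]])
      show "bm (\<lambda>\<gamma>. complex_of_real C * tp F x \<gamma>)" by (rule bm_mult[OF bm_const bm_tp[OF F]])
      fix \<gamma> assume "\<gamma> \<in> space \<mu>"
      then have "cmod (\<phi> \<gamma>) \<le> C" by (rule C)
      then have "cmod (\<phi> \<gamma>) \<le> cmod (complex_of_real C)" by (simp add: norm_of_real)
      then show "cmod (\<phi> \<gamma> * tp F x \<gamma>) \<le> cmod (complex_of_real C * tp F x \<gamma>)"
        by (simp add: norm_mult mult_right_mono)
    qed
    also have "\<dots> = C\<^sup>2 * (\<Sum>\<xi>\<in>F. (cmod (x \<xi>))\<^sup>2)"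
      by (simp add: N2_scale N2_tp[OF F] norm_of_real)
    also have "\<dots> \<le> C\<^sup>2 * sqn x" using sum_le_sqn[OF x F] by (simp add: mult_left_mono)
    finally show ?thesis .
  qed
  have lim: "((\<lambda>F. \<Sum>\<xi>\<in>E. (cmod (conv \<phi> (restr F x) \<xi>))\<^sup>2) \<longlongrightarrow>
      (\<Sum>\<xi>\<in>E. (cmod (conv \<phi> x \<xi>))\<^sup>2)) (finite_subsets_at_top UNIV)"
  proof (intro tendsto_sum tendsto_power tendsto_norm)
    fix \<xi>
    have hs: "((\<lambda>\<eta>. fourier \<mu> \<phi> (\<xi> - \<eta>) * x \<eta>) has_sum conv \<phi> x \<xi>) UNIV"
      by (rule conv_has_sum[OF \<phi> x])
    have ev: "\<forall>\<^sub>F F in finite_subsets_at_top UNIV. conv \<phi> (restr F x) \<xi> = (\<Sum>\<eta>\<in>F. fourier \<mu> \<phi> (\<xi> - \<eta>) * x \<eta>)"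
    proof (rule eventually_finite_subsets_at_top_weakI)
      fix F :: "'x set" assume "finite F"
      then show "conv \<phi> (restr F x) \<xi> = (\<Sum>\<eta>\<in>F. fourier \<mu> \<phi> (\<xi> - \<eta>) * x \<eta>)"
        by (subst conv_fin[of F]) (auto simp: restr_def)
    qed
    show "((\<lambda>F. conv \<phi> (restr F x) \<xi>) \<longlongrightarrow> conv \<phi> x \<xi>) (finite_subsets_at_top UNIV)"
      unfolding tendsto_cong[OF ev] by (rule hs[unfolded has_sum_def])
  qed
  have "\<forall>\<^sub>F F in finite_subsets_at_top UNIV. (\<Sum>\<xi>\<in>E. (cmod (conv \<phi> (restr F x) \<xi>))\<^sup>2) \<le> C\<^sup>2 * sqn x"
    by (rule eventually_finite_subsets_at_top_weakI) (use fin in auto)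
  then show "(\<Sum>\<xi>\<in>E. (cmod (conv \<phi> x \<xi>))\<^sup>2) \<le> C\<^sup>2 * sqn x"
    using lim by (intro tendsto_upperbound[OF lim]) auto
qed

end


context haarG
begin

lemma bm_tp_all: "bm (tp F c)"
proof (cases "finite F")
  case True then show ?thesis by (rule bm_tp)
next
  case False
  then have "tp F c = (\<lambda>_. 0)" unfolding tp_def by (auto simp: fun_eq_iff)
  then show ?thesis using bm_const by simp
qed

lemma fourier_bound: "bm a \<Longrightarrow> cmod (fourier \<mu> a \<xi>) \<le> sqrt (N2 a)"
  using bessel[of a] sqn_le_cmod[of "fourier \<mu> a" \<xi>] by (auto intro: order_trans real_sqrt_le_mono)

lemma fourier_diff: "bm a \<Longrightarrow> bm b \<Longrightarrow> fourier \<mu> (\<lambda>x. a x - b x) \<xi> = fourier \<mu> a \<xi> - fourier \<mu> b \<xi>"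
  unfolding fourier_ip by (rule ip_diff_left) (auto intro: bm_char)

lemma fourier_cong: "(\<And>x. x \<in> space \<mu> \<Longrightarrow> a x = b x) \<Longrightarrow> fourier \<mu> a \<xi> = fourier \<mu> b \<xi>"
  unfolding fourier_def by (intro Bochner_Integration.integral_cong) auto

lemma fourier_one: "fourier \<mu> (\<lambda>_. 1) \<eta> = (if \<eta> = 0 then 1 else 0)"
proof -
  have "fourier \<mu> (\<lambda>_. 1) \<eta> = cnj (integral\<^sup>L \<mu> (\<lambda>\<gamma>. \<gamma> \<eta>))"
    unfolding fourier_def by (simp flip: Bochner_Integration.integral_cnj)
  then show ?thesis by (simp add: integral_char)
qed

lemma check_N2:
  assumes chk: "is_check \<mu> k kc" and kc': "bm kc'" and ae: "AE x in \<mu>. kc x = kc' x"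
  shows "((\<lambda>F. N2 (\<lambda>x. kc' x - tp F k x)) \<longlongrightarrow> 0) (finite_subsets_at_top UNIV)"
proof -
  have eq: "(\<integral>\<^sup>+ x. ennreal ((cmod (kc x - (\<Sum>\<xi>\<in>F. k \<xi> * x \<xi>)))\<^sup>2) \<partial>\<mu>) =
      ennreal (N2 (\<lambda>x. kc' x - tp F k x))" for F
  proof -
    have "(\<integral>\<^sup>+ x. ennreal ((cmod (kc x - (\<Sum>\<xi>\<in>F. k \<xi> * x \<xi>)))\<^sup>2) \<partial>\<mu>) =
        (\<integral>\<^sup>+ x. ennreal ((cmod (kc' x - tp F k x))\<^sup>2) \<partial>\<mu>)"
      using ae by (intro nn_integral_cong_AE) (auto simp: tp_def)
    also have "\<dots> = ennreal (N2 (\<lambda>x. kc' x - tp F k x))"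
      unfolding N2_def by (intro nn_integral_eq_integral bm_N2_int bm_diff kc' bm_tp_all) auto
    finally show ?thesis .
  qed
  have "((\<lambda>F. ennreal (N2 (\<lambda>x. kc' x - tp F k x))) \<longlongrightarrow> ennreal 0) (finite_subsets_at_top UNIV)"
    using chk unfolding is_check_def eq by simp
  then show ?thesis by (subst (asm) tendsto_ennreal_iff) (auto simp: N2_nonneg)
qed

lemma check_prod:
  assumes chk: "is_check \<mu> k kc" and kc': "bm kc'" and ae: "AE x in \<mu>. kc x = kc' x"
    and B: "bm B"
  shows "((\<lambda>\<zeta>. k \<zeta> * fourier \<mu> B (\<xi> - \<zeta>)) has_sum fourier \<mu> (\<lambda>x. kc' x * B x) \<xi>) UNIV"
proof -
  obtain C where C: "0 \<le> C" "\<forall>x\<in>space \<mu>. cmod (B x) \<le> C" using bm_bound[OF B] by blast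
  have lim: "((\<lambda>F. C * sqrt (N2 (\<lambda>x. kc' x - tp F k x))) \<longlongrightarrow> 0) (finite_subsets_at_top UNIV)"
  proof -
    have "((\<lambda>F. sqrt (N2 (\<lambda>x. kc' x - tp F k x))) \<longlongrightarrow> 0) (finite_subsets_at_top UNIV)"
      using tendsto_real_sqrt[OF check_N2[OF chk kc' ae]] by simp
    from tendsto_mult_right_zero[OF this, of C] show ?thesis by simp
  qed
  have ev: "\<forall>\<^sub>F F in finite_subsets_at_top UNIV.
      norm ((\<Sum>\<zeta>\<in>F. k \<zeta> * fourier \<mu> B (\<xi> - \<zeta>)) - fourier \<mu> (\<lambda>x. kc' x * B x) \<xi>)
        \<le> C * sqrt (N2 (\<lambda>x. kc' x - tp F k x))"
  proof (rule eventually_finite_subsets_at_top_weakI)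
    fix F :: "'x set" assume F: "finite F"
    have "(\<Sum>\<zeta>\<in>F. k \<zeta> * fourier \<mu> B (\<xi> - \<zeta>)) = fourier \<mu> (\<lambda>x. B x * tp F k x) \<xi>"
      by (rule fourier_mult_tp[OF B F, symmetric])
    moreover have "(\<lambda>x. (kc' x - tp F k x) * B x) = (\<lambda>x. kc' x * B x - B x * tp F k x)"
      by (auto simp: fun_eq_iff algebra_simps)
    moreover have "fourier \<mu> (\<lambda>x. kc' x * B x - B x * tp F k x) \<xi> =
        fourier \<mu> (\<lambda>x. kc' x * B x) \<xi> - fourier \<mu> (\<lambda>x. B x * tp F k x) \<xi>"
      by (rule fourier_diff[OF bm_mult[OF kc' B] bm_mult[OF B bm_tp[OF F]]])
    ultimately have "(\<Sum>\<zeta>\<in>F. k \<zeta> * fourier \<mu> B (\<xi> - \<zeta>)) - fourier \<mu> (\<lambda>x. kc' x * B x) \<xi>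
        = - fourier \<mu> (\<lambda>x. (kc' x - tp F k x) * B x) \<xi>"
      by simp
    then have "norm ((\<Sum>\<zeta>\<in>F. k \<zeta> * fourier \<mu> B (\<xi> - \<zeta>)) - fourier \<mu> (\<lambda>x. kc' x * B x) \<xi>)
        \<le> sqrt (N2 (\<lambda>x. (kc' x - tp F k x) * B x))"
      using fourier_bound[OF bm_mult[OF bm_diff[OF kc' bm_tp[OF F]] B]] by simp
    also have "\<dots> \<le> sqrt (N2 (\<lambda>x. complex_of_real C * (kc' x - tp F k x)))"
    proof (intro real_sqrt_le_mono N2_mono)
      show "bm (\<lambda>x. (kc' x - tp F k x) * B x)" by (intro bm_mult bm_diff kc' bm_tp F B)
      show "bm (\<lambda>x. complex_of_real C * (kc' x - tp F k x))" by (intro bm_mult bm_diff kc' bm_tp F bm_const)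
      fix x assume "x \<in> space \<mu>"
      then show "cmod ((kc' x - tp F k x) * B x) \<le> cmod (complex_of_real C * (kc' x - tp F k x))"
      proof -
        have "cmod (B x) \<le> C" using C \<open>x \<in> space \<mu>\<close> by blast
        then have "cmod (B x) * cmod (kc' x - tp F k x) \<le> C * cmod (kc' x - tp F k x)"
          by (rule mult_right_mono) simp
        then show ?thesis using C(1) by (simp add: norm_mult norm_of_real mult.commute)
      qed
    qed
    also have "\<dots> = C * sqrt (N2 (\<lambda>x. kc' x - tp F k x))"
      using C(1) by (simp add: N2_scale norm_of_real real_sqrt_mult)
    finally show "norm ((\<Sum>\<zeta>\<in>F. k \<zeta> * fourier \<mu> B (\<xi> - \<zeta>)) - fourier \<mu> (\<lambda>x. kc' x * B x) \<xi>)
        \<le> C * sqrt (N2 (\<lambda>x. kc' x - tp F k x))" .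
  qed
  have "((\<lambda>F. (\<Sum>\<zeta>\<in>F. k \<zeta> * fourier \<mu> B (\<xi> - \<zeta>)) - fourier \<mu> (\<lambda>x. kc' x * B x) \<xi>) \<longlongrightarrow> 0)
      (finite_subsets_at_top UNIV)"
    by (rule Lim_null_comparison[OF ev lim])
  then show ?thesis unfolding has_sum_def LIM_zero_iff .
qed

lemma check_coef:
  assumes chk: "is_check \<mu> k kc" and kc': "bm kc'" and ae: "AE x in \<mu>. kc x = kc' x"
  shows "fourier \<mu> kc' \<xi> = k \<xi>"
proof -
  have h: "((\<lambda>\<zeta>. k \<zeta> * fourier \<mu> (\<lambda>_. 1) (\<xi> - \<zeta>)) has_sum fourier \<mu> (\<lambda>x. kc' x * 1) \<xi>) UNIV"
    by (rule check_prod[OF chk kc' ae bm_const])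
  have "((\<lambda>\<zeta>. k \<zeta> * fourier \<mu> (\<lambda>_. 1) (\<xi> - \<zeta>)) has_sum k \<xi>) UNIV"
    by (rule has_sum_finite_neutralI[where B="{\<xi>}"]) (auto simp: fourier_one)
  with h show ?thesis using has_sum_unique by fastforce
qed

lemma wh_eq:
  assumes x: "\<And>\<eta>. \<eta> \<notin> pos_cone \<Longrightarrow> x \<eta> = 0" and \<xi>: "\<xi> \<in> pos_cone"
  shows "wiener_hopf k x \<xi> = infsum (\<lambda>\<eta>. k (\<xi> - \<eta>) * x \<eta>) UNIV"
  unfolding wiener_hopf_def using \<xi> x by (simp, intro infsum_cong_neutral) auto

lemma wh_coef:
  assumes chk: "is_check \<mu> k kc" and kc': "bm kc'" and ae: "AE x in \<mu>. kc x = kc' x"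
    and B: "bm B" and Bpos: "\<And>\<zeta>. \<zeta> \<notin> pos_cone \<Longrightarrow> fourier \<mu> B \<zeta> = 0"
  shows "wiener_hopf k (fourier \<mu> B) \<xi> = (if \<xi> \<in> pos_cone then fourier \<mu> (\<lambda>x. kc' x * B x) \<xi> else 0)"
proof (cases "\<xi> \<in> pos_cone")
  case True
  have b: "bij_betw (\<lambda>\<zeta>. \<xi> - \<zeta>) UNIV (UNIV :: 'x set)"
    by (rule bij_betwI[where g="\<lambda>\<zeta>. \<xi> - \<zeta>"]) auto
  have "wiener_hopf k (fourier \<mu> B) \<xi> = infsum (\<lambda>\<eta>. k (\<xi> - \<eta>) * fourier \<mu> B \<eta>) UNIV"
    using wh_eq[OF Bpos True] .
  also have "\<dots> = infsum (\<lambda>\<zeta>. k \<zeta> * fourier \<mu> B (\<xi> - \<zeta>)) UNIV"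
    using infsum_reindex_bij_betw[OF b, of "\<lambda>\<eta>. k (\<xi> - \<eta>) * fourier \<mu> B \<eta>"] by simp
  also have "\<dots> = fourier \<mu> (\<lambda>x. kc' x * B x) \<xi>"
    by (rule infsumI[OF check_prod[OF chk kc' ae B]])
  finally show ?thesis using True by simp
next
  case False
  then show ?thesis unfolding wiener_hopf_def by simp
qed

lemma wh_lip:
  assumes k: "isl2 k" and x: "isl2 x" "\<And>\<eta>. \<eta> \<notin> pos_cone \<Longrightarrow> x \<eta> = 0"
    and y: "isl2 y" "\<And>\<eta>. \<eta> \<notin> pos_cone \<Longrightarrow> y \<eta> = 0"
  shows "cmod (wiener_hopf k x \<xi> - wiener_hopf k y \<xi>) \<le> sqrt (sqn k) * sqrt (sqn (\<lambda>\<eta>. x \<eta> - y \<eta>))"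
proof (cases "\<xi> \<in> pos_cone")
  case True
  have kr: "isl2 (\<lambda>\<eta>. k (\<xi> - \<eta>))" "sqn (\<lambda>\<eta>. k (\<xi> - \<eta>)) = sqn k" using isl2_reindex[OF k] by auto
  have dl: "isl2 (\<lambda>\<eta>. x \<eta> - y \<eta>)" using isl2_diff[OF x(1) y(1)] by blast
  have sx: "(\<lambda>\<eta>. k (\<xi> - \<eta>) * x \<eta>) summable_on UNIV" using isl2_CS'[OF kr(1) x(1)] by blast
  have sy: "(\<lambda>\<eta>. k (\<xi> - \<eta>) * y \<eta>) summable_on UNIV" using isl2_CS'[OF kr(1) y(1)] by blast
  have ex: "wiener_hopf k x \<xi> = infsum (\<lambda>\<eta>. k (\<xi> - \<eta>) * x \<eta>) UNIV" by (rule wh_eq[OF x(2) True])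
  have ey: "wiener_hopf k y \<xi> = infsum (\<lambda>\<eta>. k (\<xi> - \<eta>) * y \<eta>) UNIV" by (rule wh_eq[OF y(2) True])
  have "wiener_hopf k x \<xi> - wiener_hopf k y \<xi> = infsum (\<lambda>\<eta>. k (\<xi> - \<eta>) * (x \<eta> - y \<eta>)) UNIV"
    unfolding ex ey using has_sum_diff'[OF has_sum_infsum[OF sx] has_sum_infsum[OF sy]]
    by (simp add: infsumI right_diff_distrib)
  also have "cmod \<dots> \<le> sqrt (sqn k) * sqrt (sqn (\<lambda>\<eta>. x \<eta> - y \<eta>))"
    using isl2_CS'[OF kr(1) dl] kr(2) by simp
  finally show ?thesis .
next
  case False
  then show ?thesis unfolding wiener_hopf_def by (simp add: sqn_nonneg)
qed

end


lemma l2_iff: "x \<in> l2 A \<longleftrightarrow> (\<forall>\<xi>. \<xi> \<notin> A \<longrightarrow> x \<xi> = 0) \<and> isl2 x"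
  unfolding l2_def isl2_def by auto

lemma l2_diff: "x \<in> l2 A \<Longrightarrow> y \<in> l2 A \<Longrightarrow> (\<lambda>\<xi>. x \<xi> - y \<xi>) \<in> l2 A"
  unfolding l2_iff using isl2_diff by auto

lemma l2_add: "x \<in> l2 A \<Longrightarrow> y \<in> l2 A \<Longrightarrow> (\<lambda>\<xi>. x \<xi> + y \<xi>) \<in> l2 A"
  unfolding l2_iff using isl2_add by auto

lemma l2_zero: "(\<lambda>_. 0) \<in> l2 A"
  unfolding l2_iff isl2_def by simp

lemma sqn_zero: "sqn (\<lambda>_. 0) = 0"
  unfolding sqn_def by simp

lemma sqn_diff_sym: "sqn (\<lambda>\<xi>. x \<xi> - y \<xi>) = sqn (\<lambda>\<xi>. y \<xi> - x \<xi>)"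
  unfolding sqn_def by (simp add: norm_minus_commute)

lemma sqrt_sqn_tri:
  assumes "isl2 x" "isl2 y" "isl2 z"
  shows "sqrt (sqn (\<lambda>\<xi>. x \<xi> - z \<xi>)) \<le> sqrt (sqn (\<lambda>\<xi>. x \<xi> - y \<xi>)) + sqrt (sqn (\<lambda>\<xi>. y \<xi> - z \<xi>))"
proof -
  have a: "isl2 (\<lambda>\<xi>. x \<xi> - y \<xi>)" "isl2 (\<lambda>\<xi>. y \<xi> - z \<xi>)" using isl2_diff assms by blast+
  from isl2_add[OF a] show ?thesis by simp
qed

lemma neumann:
  fixes T :: "('a \<Rightarrow> complex) \<Rightarrow> ('a \<Rightarrow> complex)"
  assumes Tmap: "\<And>x. x \<in> l2 A \<Longrightarrow> T x \<in> l2 A"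
    and Tlin: "\<And>x y. x \<in> l2 A \<Longrightarrow> y \<in> l2 A \<Longrightarrow> T (\<lambda>\<xi>. x \<xi> - y \<xi>) = (\<lambda>\<xi>. T x \<xi> - T y \<xi>)"
    and Tb: "\<And>x. x \<in> l2 A \<Longrightarrow> sqn (T x) \<le> c\<^sup>2 * sqn x"
    and c: "0 \<le> c" "c < 1" and y: "y \<in> l2 A"
  shows "\<exists>g \<in> l2 A. \<forall>\<xi>. g \<xi> = y \<xi> + T g \<xi>"
proof -
  have Tb': "sqrt (sqn (T x)) \<le> c * sqrt (sqn x)" if "x \<in> l2 A" for x
    using real_sqrt_le_mono[OF Tb[OF that]] c by (simp add: real_sqrt_mult)
  define G where "G = rec_nat (\<lambda>_. 0) (\<lambda>n x \<xi>. y \<xi> + T x \<xi>)"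
  have G0: "G 0 = (\<lambda>_. 0)" and GS: "G (Suc n) = (\<lambda>\<xi>. y \<xi> + T (G n) \<xi>)" for n
    unfolding G_def by simp_all
  have Gl2: "G n \<in> l2 A" for n
    by (induction n) (auto simp: G0 GS l2_zero intro!: l2_add y Tmap)
  have Gi: "isl2 (G n)" for n using Gl2 l2_iff by blast
  define a where "a = sqrt (sqn y)"
  have a0: "a \<ge> 0" unfolding a_def by (simp add: sqn_nonneg)
  have T0: "T (\<lambda>_. 0) = (\<lambda>_. 0)"
    using Tlin[OF l2_zero l2_zero] by (simp add: fun_eq_iff)
  have D: "sqrt (sqn (\<lambda>\<xi>. G (Suc n) \<xi> - G n \<xi>)) \<le> c ^ n * a" for n
  proof (induction n)
    case 0 then show ?case by (simp add: G0 GS T0 a_def)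
  next
    case (Suc n)
    have e1: "G (Suc (Suc n)) \<xi> = y \<xi> + T (G (Suc n)) \<xi>" for \<xi> by (simp only: GS)
    have e2: "G (Suc n) \<xi> = y \<xi> + T (G n) \<xi>" for \<xi> by (simp only: GS)
    have "(\<lambda>\<xi>. G (Suc (Suc n)) \<xi> - G (Suc n) \<xi>) = (\<lambda>\<xi>. T (G (Suc n)) \<xi> - T (G n) \<xi>)"
      by (simp only: e1 e2) simp
    also have "\<dots> = T (\<lambda>\<xi>. G (Suc n) \<xi> - G n \<xi>)" by (rule Tlin[OF Gl2 Gl2, symmetric])
    finally have "(\<lambda>\<xi>. G (Suc (Suc n)) \<xi> - G (Suc n) \<xi>) = T (\<lambda>\<xi>. G (Suc n) \<xi> - G n \<xi>)" .
    then have "sqrt (sqn (\<lambda>\<xi>. G (Suc (Suc n)) \<xi> - G (Suc n) \<xi>)) \<le> c * sqrt (sqn (\<lambda>\<xi>. G (Suc n) \<xi> - G n \<xi>))"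
      using Tb'[OF l2_diff[OF Gl2 Gl2]] by simp
    also have "\<dots> \<le> c * (c ^ n * a)" using Suc c by (simp add: mult_left_mono)
    finally show ?case by simp
  qed
  have Dsum: "sqrt (sqn (\<lambda>\<xi>. G (n + j) \<xi> - G n \<xi>)) \<le> a * c ^ n * (1 - c ^ j) / (1 - c)" for n j
  proof (induction j)
    case 0 then show ?case by (simp add: sqn_zero)
  next
    case (Suc j)
    have "sqrt (sqn (\<lambda>\<xi>. G (n + Suc j) \<xi> - G n \<xi>)) \<le>
        sqrt (sqn (\<lambda>\<xi>. G (Suc (n + j)) \<xi> - G (n + j) \<xi>)) + sqrt (sqn (\<lambda>\<xi>. G (n + j) \<xi> - G n \<xi>))"
      using sqrt_sqn_tri[OF Gi Gi Gi] by simp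
    also have "\<dots> \<le> c ^ (n + j) * a + a * c ^ n * (1 - c ^ j) / (1 - c)"
      using D[of "n + j"] Suc by linarith
    also have "\<dots> = a * c ^ n * (1 - c ^ Suc j) / (1 - c)"
      using c by (simp add: field_simps power_add)
    finally show ?case .
  qed
  have Dbound: "sqrt (sqn (\<lambda>\<xi>. G m \<xi> - G n \<xi>)) \<le> a * c ^ n / (1 - c)" if nm: "n \<le> m" for m n
  proof -
    obtain j where m: "m = n + j" using le_Suc_ex[OF nm] by blast
    have "a * c ^ n * (1 - c ^ j) / (1 - c) \<le> a * c ^ n / (1 - c)"
    proof -
      have "a * c ^ n * (1 - c ^ j) \<le> a * c ^ n" using c a0 by (intro mult_left_le) auto
      then show ?thesis by (rule divide_right_mono) (use c in auto)
    qed
    with Dsum[of n j] m show ?thesis by simp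
  qed
  have cpow: "(\<lambda>n. a * c ^ n / (1 - c)) \<longlonglongrightarrow> 0"
    using c by (intro tendsto_divide_zero tendsto_mult_right_zero LIMSEQ_power_zero) auto
  have cau: "\<exists>N. \<forall>m\<ge>N. \<forall>n\<ge>N. sqn (\<lambda>\<xi>. G m \<xi> - G n \<xi>) < e" if e: "e > 0" for e
  proof -
    obtain N where N: "\<forall>n\<ge>N. \<bar>a * c ^ n / (1 - c)\<bar> < sqrt e"
      using cpow e unfolding LIMSEQ_def dist_real_def by (metis diff_zero real_sqrt_gt_0_iff)
    have "sqn (\<lambda>\<xi>. G m \<xi> - G n \<xi>) < e" if "m \<ge> N" "n \<ge> N" for m n
    proof -
      have "sqrt (sqn (\<lambda>\<xi>. G m \<xi> - G n \<xi>)) < sqrt e"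
      proof (cases "n \<le> m")
        case True
        have "\<bar>a * c ^ n / (1 - c)\<bar> < sqrt e" using N that(2) by blast
        then have "a * c ^ n / (1 - c) < sqrt e" by (rule le_less_trans[OF abs_ge_self])
        then show ?thesis using Dbound[OF True] by linarith
      next
        case False
        then have mn: "m \<le> n" by simp
        have "\<bar>a * c ^ m / (1 - c)\<bar> < sqrt e" using N that(1) by blast
        then have "a * c ^ m / (1 - c) < sqrt e" by (rule le_less_trans[OF abs_ge_self])
        then have "sqrt (sqn (\<lambda>\<xi>. G n \<xi> - G m \<xi>)) < sqrt e" using Dbound[OF mn] by linarith
        then show ?thesis using sqn_diff_sym[of "G n" "G m"] by simp
      qed
      then show ?thesis by (simp add: real_sqrt_less_iff)
    qed
    then show ?thesis by blast
  qed
  obtain g where g: "isl2 g" "\<forall>e>0. \<exists>N. \<forall>n\<ge>N. isl2 (\<lambda>\<xi>. G n \<xi> - g \<xi>) \<and> sqn (\<lambda>\<xi>. G n \<xi> - g \<xi>) \<le> e"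
    using isl2_complete[of G, OF Gi cau] by blast
  have close: "cmod (G n \<xi> - g \<xi>) \<le> sqrt e" if "e > 0" "\<forall>n\<ge>N. sqn (\<lambda>\<xi>. G n \<xi> - g \<xi>) \<le> e" "n \<ge> N"
    for e N n \<xi>
  proof -
    have "isl2 (\<lambda>\<xi>. G n \<xi> - g \<xi>)" using isl2_diff[OF Gi g(1)] by blast
    from sqn_le_cmod[OF this, of \<xi>] that show ?thesis by (auto intro: order_trans real_sqrt_le_mono)
  qed
  have gA: "g \<xi> = 0" if "\<xi> \<notin> A" for \<xi>
  proof (rule ccontr)
    assume nz: "g \<xi> \<noteq> 0"
    define e where "e = (cmod (g \<xi>))\<^sup>2 / 4"
    have e: "e > 0" using nz unfolding e_def by simp
    then obtain N where N: "\<forall>n\<ge>N. sqn (\<lambda>\<xi>. G n \<xi> - g \<xi>) \<le> e" using g(2) by blast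
    have "G N \<xi> = 0" using Gl2[of N] that unfolding l2_iff by blast
    then have "cmod (g \<xi>) \<le> sqrt e" using close[OF e N, of N \<xi>] by simp
    also have "sqrt e = cmod (g \<xi>) / 2" unfolding e_def by (simp add: real_sqrt_divide)
    finally show False using nz by simp
  qed
  have gl2: "g \<in> l2 A" using gA g(1) unfolding l2_iff by blast
  have gfix: "g \<xi> = y \<xi> + T g \<xi>" for \<xi>
  proof -
    have "cmod (g \<xi> - (y \<xi> + T g \<xi>)) \<le> (1 + c) * sqrt e" if e: "e > 0" for e
    proof -
      obtain N where N: "\<forall>n\<ge>N. sqn (\<lambda>\<xi>. G n \<xi> - g \<xi>) \<le> e" using g(2) e by blast
      have "g \<xi> - (y \<xi> + T g \<xi>) = (g \<xi> - G (Suc N) \<xi>) + (T (G N) \<xi> - T g \<xi>)"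
        by (simp add: GS)
      also have "T (G N) \<xi> - T g \<xi> = T (\<lambda>\<xi>. G N \<xi> - g \<xi>) \<xi>" using Tlin[OF Gl2 gl2] by simp
      finally have "cmod (g \<xi> - (y \<xi> + T g \<xi>)) \<le> cmod (g \<xi> - G (Suc N) \<xi>) + cmod (T (\<lambda>\<xi>. G N \<xi> - g \<xi>) \<xi>)"
        by (metis norm_triangle_ineq)
      also have "cmod (g \<xi> - G (Suc N) \<xi>) \<le> sqrt e"
        using close[OF e N, of "Suc N" \<xi>] by (simp add: norm_minus_commute)
      also have "cmod (T (\<lambda>\<xi>. G N \<xi> - g \<xi>) \<xi>) \<le> c * sqrt e"
      proof -
        have dl: "(\<lambda>\<xi>. G N \<xi> - g \<xi>) \<in> l2 A" by (rule l2_diff[OF Gl2 gl2])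
        have "cmod (T (\<lambda>\<xi>. G N \<xi> - g \<xi>) \<xi>) \<le> sqrt (sqn (T (\<lambda>\<xi>. G N \<xi> - g \<xi>)))"
          using Tmap[OF dl] unfolding l2_iff by (blast intro: sqn_le_cmod)
        also have "\<dots> \<le> c * sqrt (sqn (\<lambda>\<xi>. G N \<xi> - g \<xi>))" by (rule Tb'[OF dl])
        also have "\<dots> \<le> c * sqrt e" using N c by (auto intro: mult_left_mono real_sqrt_le_mono)
        finally show ?thesis .
      qed
      finally show ?thesis by (simp add: algebra_simps)
    qed
    then have "cmod (g \<xi> - (y \<xi> + T g \<xi>)) = 0"
    proof -
      assume h: "\<And>e. e > 0 \<Longrightarrow> cmod (g \<xi> - (y \<xi> + T g \<xi>)) \<le> (1 + c) * sqrt e"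
      show ?thesis
      proof (rule ccontr)
        let ?d = "cmod (g \<xi> - (y \<xi> + T g \<xi>))"
        assume "?d \<noteq> 0"
        then have d: "?d > 0" by simp
        define e where "e = (?d / (2 * (1 + c)))\<^sup>2"
        have e0: "e > 0" using d c unfolding e_def by simp
        have "sqrt e = ?d / (2 * (1 + c))" unfolding e_def using d c by simp
        then have "(1 + c) * sqrt e = ?d / 2" using c by (simp add: field_simps)
        then show False using h[OF e0] d by simp
      qed
    qed
    then show ?thesis by simp
  qed
  show ?thesis using gl2 gfix by blast
qed


lemma small_zero:
  fixes d :: complex
  assumes K: "0 \<le> K" and h: "\<And>e. e > 0 \<Longrightarrow> cmod d \<le> K * sqrt e"
  shows "d = 0"
proof (rule ccontr)
  assume "d \<noteq> 0"
  then have d: "cmod d > 0" by simp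
  define e where "e = (cmod d / (K + 1))\<^sup>2"
  have e: "e > 0" unfolding e_def using d K by simp
  have "sqrt e = cmod d / (K + 1)" unfolding e_def using d K by simp
  then have "cmod d \<le> K * (cmod d / (K + 1))" using h[OF e] by simp
  also have "\<dots> < cmod d" using d K by (simp add: field_simps)
  finally show False by simp
qed

lemma tri3: "cmod (a - b + d) \<le> cmod a + cmod b + cmod (d::complex)"
  using norm_triangle_ineq[of "a - b" d] norm_triangle_ineq4[of a b] by linarith

lemma pos_cone_iff: "\<xi> \<in> pos_cone \<longleftrightarrow> 0 \<le> \<xi>"
  unfolding pos_cone_def by simp

context haarG
begin

definition Tp :: "(('x \<Rightarrow> complex) \<Rightarrow> complex) \<Rightarrow> ('x \<Rightarrow> complex) \<Rightarrow> 'x \<Rightarrow> complex" where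
  "Tp \<phi> x \<xi> = (if \<xi> \<in> pos_cone then conv \<phi> x \<xi> else 0)"

lemma Tp_bound:
  assumes \<phi>: "bm \<phi>" and C: "\<And>\<gamma>. \<gamma> \<in> space \<mu> \<Longrightarrow> cmod (\<phi> \<gamma>) \<le> C" and x: "isl2 x"
  shows "Tp \<phi> x \<in> l2 pos_cone \<and> sqn (Tp \<phi> x) \<le> C\<^sup>2 * sqn x"
proof -
  have cb: "isl2 (conv \<phi> x)" "sqn (conv \<phi> x) \<le> C\<^sup>2 * sqn x" using conv_bound[OF \<phi> C x] by auto
  have "isl2 (Tp \<phi> x) \<and> sqn (Tp \<phi> x) \<le> C\<^sup>2 * sqn x"
  proof (rule bdd_isl2)
    fix E :: "'x set" assume E: "finite E"
    have "(\<Sum>\<xi>\<in>E. (cmod (Tp \<phi> x \<xi>))\<^sup>2) \<le> (\<Sum>\<xi>\<in>E. (cmod (conv \<phi> x \<xi>))\<^sup>2)"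
      unfolding Tp_def by (intro sum_mono) auto
    also have "\<dots> \<le> sqn (conv \<phi> x)" by (rule sum_le_sqn[OF cb(1) E])
    finally show "(\<Sum>\<xi>\<in>E. (cmod (Tp \<phi> x \<xi>))\<^sup>2) \<le> C\<^sup>2 * sqn x" using cb(2) by simp
  qed
  then show ?thesis unfolding l2_iff Tp_def by auto
qed

lemma Tp_diff: "bm \<phi> \<Longrightarrow> isl2 x \<Longrightarrow> isl2 y \<Longrightarrow> Tp \<phi> (\<lambda>\<eta>. x \<eta> - y \<eta>) = (\<lambda>\<xi>. Tp \<phi> x \<xi> - Tp \<phi> y \<xi>)"
  unfolding Tp_def by (auto simp: conv_diff fun_eq_iff)

lemma Tp_pt: "Tp \<phi> x \<in> l2 A \<Longrightarrow> cmod (Tp \<phi> x \<xi>) \<le> sqrt (sqn (Tp \<phi> x))"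
  unfolding l2_iff by (blast intro: sqn_le_cmod)

lemma restr_l2: "g \<in> l2 A \<Longrightarrow> finite F \<Longrightarrow> restr F g \<in> l2 A"
  unfolding l2_iff using restr_sqn by (auto simp: restr_def)

lemma core:
  assumes chk: "is_check \<mu> k kc" and kc': "bm kc'" and ae: "AE x in \<mu>. kc x = kc' x"
    and kcu: "\<And>x. x \<in> space \<mu> \<Longrightarrow> cmod (kc' x) = 1"
    and kl2: "isl2 k"
    and inj: "inj_on (wiener_hopf k) (l2 pos_cone)"
    and \<psi>: "bm \<psi>" and \<psi>pos: "\<And>\<zeta>. \<zeta> \<notin> pos_cone \<Longrightarrow> fourier \<mu> \<psi> \<zeta> = 0"
    and c: "0 \<le> c" "c < 1" and cb: "\<And>x. x \<in> space \<mu> \<Longrightarrow> cmod (kc' x - cnj (\<psi> x)) \<le> c"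
  shows "\<And>\<zeta>. \<zeta> \<notin> pos_cone \<Longrightarrow> fourier \<mu> (\<lambda>x. 1 / \<psi> x) \<zeta> = 0"
proof -
  define r where "r x = 1 - kc' x * \<psi> x" for x
  have rbm: "bm r" unfolding r_def by (intro bm_diff bm_const bm_mult kc' \<psi>)
  have rb: "cmod (r x) \<le> c" if x: "x \<in> space \<mu>" for x
  proof -
    have "kc' x * cnj (kc' x) = 1" using unimod_cnj[OF kcu[OF x]] .
    then have "r x = kc' x * cnj (kc' x - cnj (\<psi> x))" unfolding r_def by (simp add: algebra_simps)
    moreover have "cmod (cnj (kc' x - cnj (\<psi> x))) = cmod (kc' x - cnj (\<psi> x))" by (rule complex_mod_cnj)
    ultimately have "cmod (r x) = cmod (kc' x - cnj (\<psi> x))" using kcu[OF x] by (simp only: norm_mult)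
    then show ?thesis using cb[OF x] by simp
  qed
  obtain Cp where Cp: "0 \<le> Cp" "\<And>x. x \<in> space \<mu> \<Longrightarrow> cmod (\<psi> x) \<le> Cp" using bm_bound[OF \<psi>] by blast
  have \<psi>low: "1 - c \<le> cmod (\<psi> x)" if x: "x \<in> space \<mu>" for x
  proof -
    have "cmod (kc' x) \<le> cmod (kc' x - cnj (\<psi> x)) + cmod (cnj (\<psi> x))"
      using norm_triangle_sub[of "kc' x" "cnj (\<psi> x)"] by (simp add: add.commute)
    then show ?thesis using kcu[OF x] cb[OF x] by simp
  qed
  have \<psi>nz: "\<psi> x \<noteq> 0" if "x \<in> space \<mu>" for x using \<psi>low[OF that] c by auto
  have Tr: "Tp r x \<in> l2 pos_cone \<and> sqn (Tp r x) \<le> c\<^sup>2 * sqn x" if "isl2 x" for x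
    by (rule Tp_bound[OF rbm rb that])
  have T\<psi>: "Tp \<psi> x \<in> l2 pos_cone \<and> sqn (Tp \<psi> x) \<le> Cp\<^sup>2 * sqn x" if "isl2 x" for x
    by (rule Tp_bound[OF \<psi> Cp(2) that])
  have l2i: "isl2 x" if "x \<in> l2 pos_cone" for x using that l2_iff by blast
  have Bcoef: "fourier \<mu> (\<lambda>\<gamma>. \<psi> \<gamma> * tp F g \<gamma>) \<xi> = Tp \<psi> (restr F g) \<xi>"
    if g: "g \<in> l2 pos_cone" and F: "finite F" for g F \<xi>
  proof (cases "\<xi> \<in> pos_cone")
    case True
    then show ?thesis unfolding Tp_def using conv_tp[OF \<psi> F] by simp
  next
    case False
    have "fourier \<mu> (\<lambda>\<gamma>. \<psi> \<gamma> * tp F g \<gamma>) \<xi> = (\<Sum>\<eta>\<in>F. g \<eta> * fourier \<mu> \<psi> (\<xi> - \<eta>))"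
      by (rule fourier_mult_tp[OF \<psi> F])
    also have "\<dots> = 0"
    proof (rule sum.neutral, intro ballI)
      fix \<eta> assume "\<eta> \<in> F"
      show "g \<eta> * fourier \<mu> \<psi> (\<xi> - \<eta>) = 0"
      proof (cases "\<eta> \<in> pos_cone")
        case True
        then have "\<xi> - \<eta> \<notin> pos_cone" using False by (auto simp: pos_cone_iff)
        then show ?thesis using \<psi>pos by simp
      next
        case False
        then show ?thesis using g unfolding l2_iff by simp
      qed
    qed
    finally show ?thesis using False unfolding Tp_def by simp
  qed
  have Bpos: "fourier \<mu> (\<lambda>\<gamma>. \<psi> \<gamma> * tp F g \<gamma>) \<zeta> = 0"
    if "g \<in> l2 pos_cone" "finite F" "\<zeta> \<notin> pos_cone" for g F \<zeta>
    using Bcoef[OF that(1,2)] that(3) unfolding Tp_def by simp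
  have key_fin: "wiener_hopf k (Tp \<psi> (restr F g)) \<xi> = restr F g \<xi> - Tp r (restr F g) \<xi>"
    if g: "g \<in> l2 pos_cone" and F: "finite F" for g F \<xi>
  proof -
    let ?B = "\<lambda>\<gamma>. \<psi> \<gamma> * tp F g \<gamma>"
    have Bbm: "bm ?B" by (intro bm_mult \<psi> bm_tp F)
    have eqB: "Tp \<psi> (restr F g) = fourier \<mu> ?B" using Bcoef[OF g F] by (simp add: fun_eq_iff)
    have wh: "wiener_hopf k (fourier \<mu> ?B) \<xi> =
        (if \<xi> \<in> pos_cone then fourier \<mu> (\<lambda>x. kc' x * ?B x) \<xi> else 0)"
      by (rule wh_coef[OF chk kc' ae Bbm Bpos[OF g F]])
    have "(\<lambda>x. kc' x * ?B x) = (\<lambda>x. tp F g x - r x * tp F g x)"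
      unfolding r_def by (auto simp: fun_eq_iff algebra_simps)
    then have "fourier \<mu> (\<lambda>x. kc' x * ?B x) \<xi> = fourier \<mu> (tp F g) \<xi> - fourier \<mu> (\<lambda>x. r x * tp F g x) \<xi>"
      using fourier_diff[OF bm_tp[OF F] bm_mult[OF rbm bm_tp[OF F]]] by simp
    also have "\<dots> = restr F g \<xi> - conv r (restr F g) \<xi>"
      using fourier_tp[OF F] conv_tp[OF rbm F] by (simp add: restr_def)
    finally have fk: "fourier \<mu> (\<lambda>x. kc' x * ?B x) \<xi> = restr F g \<xi> - conv r (restr F g) \<xi>" .
    show ?thesis
    proof (cases "\<xi> \<in> pos_cone")
      case True
      then show ?thesis unfolding eqB wh fk Tp_def by simp
    next
      case False
      then have "restr F g \<xi> = 0" using g unfolding l2_iff restr_def by simp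
      then show ?thesis unfolding eqB wh Tp_def using False by simp
    qed
  qed
  have key: "wiener_hopf k (Tp \<psi> g) \<xi> = g \<xi> - Tp r g \<xi>" if g: "g \<in> l2 pos_cone" for g \<xi>
  proof -
    have gi: "isl2 g" using l2i[OF g] .
    define K where "K = sqrt (sqn k) * Cp + 1 + c"
    have K0: "0 \<le> K" unfolding K_def using Cp c by (simp add: sqn_nonneg)
    have "cmod (wiener_hopf k (Tp \<psi> g) \<xi> - (g \<xi> - Tp r g \<xi>)) \<le> K * sqrt e" if e: "e > 0" for e
    proof -
      obtain F where F: "finite F" "isl2 (\<lambda>\<xi>. g \<xi> - restr F g \<xi>)" "sqn (\<lambda>\<xi>. g \<xi> - restr F g \<xi>) < e"
        using restr_tail[OF gi e] by blast
      let ?x = "restr F g"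
      have xl2: "?x \<in> l2 pos_cone" by (rule restr_l2[OF g F(1)])
      have xi: "isl2 ?x" using l2i[OF xl2] .
      have d: "(\<lambda>\<eta>. g \<eta> - ?x \<eta>) \<in> l2 pos_cone" by (rule l2_diff[OF g xl2])
      have sd: "sqrt (sqn (\<lambda>\<eta>. g \<eta> - ?x \<eta>)) \<le> sqrt e" using F(3) by simp
      have "Tp \<psi> (\<lambda>\<eta>. g \<eta> - ?x \<eta>) = (\<lambda>\<xi>. Tp \<psi> g \<xi> - Tp \<psi> ?x \<xi>)" by (rule Tp_diff[OF \<psi> gi xi])
      then have a1: "sqrt (sqn (\<lambda>\<xi>. Tp \<psi> g \<xi> - Tp \<psi> ?x \<xi>)) \<le> Cp * sqrt e"
        using T\<psi>[OF l2i[OF d]] sd Cp(1)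
        by (metis (no_types, lifting) mult_left_mono order_trans real_sqrt_abs real_sqrt_le_mono
            real_sqrt_mult abs_of_nonneg)
      have t1: "cmod (wiener_hopf k (Tp \<psi> g) \<xi> - wiener_hopf k (Tp \<psi> ?x) \<xi>) \<le> sqrt (sqn k) * (Cp * sqrt e)"
      proof -
        have p1: "Tp \<psi> g \<in> l2 pos_cone" "Tp \<psi> ?x \<in> l2 pos_cone" using T\<psi> gi xi by auto
        have "cmod (wiener_hopf k (Tp \<psi> g) \<xi> - wiener_hopf k (Tp \<psi> ?x) \<xi>)
            \<le> sqrt (sqn k) * sqrt (sqn (\<lambda>\<eta>. Tp \<psi> g \<eta> - Tp \<psi> ?x \<eta>))"
          using p1 unfolding l2_iff by (intro wh_lip kl2) auto
        also have "\<dots> \<le> sqrt (sqn k) * (Cp * sqrt e)" using a1 by (intro mult_left_mono) (auto simp: sqn_nonneg)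
        finally show ?thesis .
      qed
      have t2: "cmod (g \<xi> - ?x \<xi>) \<le> sqrt e"
        using order_trans[OF sqn_le_cmod[OF F(2), of \<xi>] sd] .
      have t3: "cmod (Tp r g \<xi> - Tp r ?x \<xi>) \<le> c * sqrt e"
      proof -
        have "Tp r (\<lambda>\<eta>. g \<eta> - ?x \<eta>) = (\<lambda>\<xi>. Tp r g \<xi> - Tp r ?x \<xi>)" by (rule Tp_diff[OF rbm gi xi])
        moreover have "cmod (Tp r (\<lambda>\<eta>. g \<eta> - ?x \<eta>) \<xi>) \<le> sqrt (sqn (Tp r (\<lambda>\<eta>. g \<eta> - ?x \<eta>)))"
          using Tr[OF l2i[OF d]] by (blast intro: Tp_pt)
        moreover have "sqrt (sqn (Tp r (\<lambda>\<eta>. g \<eta> - ?x \<eta>))) \<le> c * sqrt e"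
        proof -
          have "sqn (Tp r (\<lambda>\<eta>. g \<eta> - ?x \<eta>)) \<le> c\<^sup>2 * sqn (\<lambda>\<eta>. g \<eta> - ?x \<eta>)" using Tr[OF l2i[OF d]] by blast
          then have "sqrt (sqn (Tp r (\<lambda>\<eta>. g \<eta> - ?x \<eta>))) \<le> c * sqrt (sqn (\<lambda>\<eta>. g \<eta> - ?x \<eta>))"
            using real_sqrt_le_mono c(1) by (fastforce simp: real_sqrt_mult)
          also have "\<dots> \<le> c * sqrt e" using sd c(1) by (simp add: mult_left_mono)
          finally show ?thesis .
        qed
        ultimately show ?thesis by simp
      qed
      have eqd: "wiener_hopf k (Tp \<psi> g) \<xi> - (g \<xi> - Tp r g \<xi>) =
          (wiener_hopf k (Tp \<psi> g) \<xi> - wiener_hopf k (Tp \<psi> ?x) \<xi>) - (g \<xi> - ?x \<xi>) + (Tp r g \<xi> - Tp r ?x \<xi>)"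
        using key_fin[OF g F(1), of \<xi>] by simp
      have "cmod (wiener_hopf k (Tp \<psi> g) \<xi> - (g \<xi> - Tp r g \<xi>)) \<le> cmod (wiener_hopf k (Tp \<psi> g) \<xi> - wiener_hopf k (Tp \<psi> ?x) \<xi>) + cmod (g \<xi> - ?x \<xi>)
          + cmod (Tp r g \<xi> - Tp r ?x \<xi>)"
        unfolding eqd by (rule tri3)
      also have "\<dots> \<le> sqrt (sqn k) * (Cp * sqrt e) + sqrt e + c * sqrt e" using t1 t2 t3 by linarith
      also have "\<dots> = K * sqrt e" unfolding K_def by (simp add: algebra_simps)
      finally show ?thesis .
    qed
    from small_zero[OF K0 this] show ?thesis by simp
  qed
  define y0 where "y0 \<xi> = (if \<xi> \<in> pos_cone then k \<xi> else 0)" for \<xi>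
  have y0l2: "y0 \<in> l2 pos_cone"
  proof -
    have "isl2 y0 \<and> sqn y0 \<le> sqn k"
    proof (rule bdd_isl2)
      fix E :: "'x set" assume E: "finite E"
      have "(\<Sum>\<xi>\<in>E. (cmod (y0 \<xi>))\<^sup>2) \<le> (\<Sum>\<xi>\<in>E. (cmod (k \<xi>))\<^sup>2)"
        unfolding y0_def by (intro sum_mono) auto
      also have "\<dots> \<le> sqn k" by (rule sum_le_sqn[OF kl2 E])
      finally show "(\<Sum>\<xi>\<in>E. (cmod (y0 \<xi>))\<^sup>2) \<le> sqn k" .
    qed
    then show ?thesis unfolding l2_iff y0_def by auto
  qed
  obtain g where g: "g \<in> l2 pos_cone" and gfix: "\<And>\<xi>. g \<xi> = y0 \<xi> + Tp r g \<xi>"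
  proof -
    have "\<exists>g \<in> l2 pos_cone. \<forall>\<xi>. g \<xi> = y0 \<xi> + Tp r g \<xi>"
    proof (rule neumann[OF _ _ _ c y0l2])
      show "\<And>x. x \<in> l2 pos_cone \<Longrightarrow> Tp r x \<in> l2 pos_cone" using Tr l2i by blast
      show "\<And>x y. x \<in> l2 pos_cone \<Longrightarrow> y \<in> l2 pos_cone \<Longrightarrow>
          Tp r (\<lambda>\<xi>. x \<xi> - y \<xi>) = (\<lambda>\<xi>. Tp r x \<xi> - Tp r y \<xi>)"
        using Tp_diff[OF rbm] l2i by blast
      show "\<And>x. x \<in> l2 pos_cone \<Longrightarrow> sqn (Tp r x) \<le> c\<^sup>2 * sqn x" using Tr l2i by blast
    qed
    then show ?thesis using that by blast
  qed
  define \<delta> where "\<delta> \<eta> = (if \<eta> = 0 then 1 else 0 :: complex)" for \<eta> :: 'x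
  have \<delta>l2: "\<delta> \<in> l2 pos_cone"
  proof -
    have "isl2 \<delta>" using sqn_fin[of "{0}" \<delta>] unfolding \<delta>_def by auto
    then show ?thesis unfolding l2_iff \<delta>_def by (auto simp: pos_cone_iff)
  qed
  have wd: "wiener_hopf k \<delta> = y0"
  proof
    fix \<xi>
    show "wiener_hopf k \<delta> \<xi> = y0 \<xi>"
    proof (cases "\<xi> \<in> pos_cone")
      case True
      have "infsum (\<lambda>\<eta>. k (\<xi> - \<eta>) * \<delta> \<eta>) pos_cone = k \<xi>"
        by (rule infsumI, rule has_sum_finite_neutralI[where B="{0}"]) (auto simp: \<delta>_def pos_cone_iff)
      then show ?thesis using True unfolding wiener_hopf_def y0_def by simp
    next
      case False then show ?thesis unfolding wiener_hopf_def y0_def by simp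
    qed
  qed
  have Tg: "Tp \<psi> g = \<delta>"
  proof (rule inj_onD[OF inj])
    show "wiener_hopf k (Tp \<psi> g) = wiener_hopf k \<delta>"
      unfolding wd using key[OF g] gfix by (simp add: fun_eq_iff)
    show "Tp \<psi> g \<in> l2 pos_cone" using T\<psi> l2i[OF g] by blast
    show "\<delta> \<in> l2 pos_cone" by (rule \<delta>l2)
  qed
  define h where "h x = 1 / \<psi> x" for x
  have hb: "cmod (h x) \<le> 1 / (1 - c)" if "x \<in> space \<mu>" for x
    unfolding h_def using \<psi>low[OF that] c by (simp add: norm_divide frac_le)
  have hbm: "bm h" unfolding bm_def h_def
    using bm_meas[OF \<psi>] hb unfolding h_def by (auto intro!: exI[of _ "1 / (1 - c)"])
  fix \<zeta> :: 'x assume \<zeta>: "\<zeta> \<notin> pos_cone"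
  have K0: "0 \<le> Cp / (1 - c)" using Cp c by simp
  have "cmod (fourier \<mu> h \<zeta>) \<le> Cp / (1 - c) * sqrt e" if e: "e > 0" for e
  proof -
    have gi: "isl2 g" using l2i[OF g] .
    obtain F where F: "finite F" "isl2 (\<lambda>\<xi>. g \<xi> - restr F g \<xi>)" "sqn (\<lambda>\<xi>. g \<xi> - restr F g \<xi>) < e"
      using restr_tail[OF gi e] by blast
    let ?x = "restr F g"
    have xl2: "?x \<in> l2 pos_cone" by (rule restr_l2[OF g F(1)])
    have xi: "isl2 ?x" using l2i[OF xl2] .
    define D where "D \<gamma> = \<psi> \<gamma> * tp F g \<gamma> - 1" for \<gamma>
    have Dbm: "bm D" unfolding D_def by (intro bm_diff bm_mult \<psi> bm_tp F(1) bm_const)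
    have Dc: "fourier \<mu> D = (\<lambda>\<xi>. Tp \<psi> ?x \<xi> - Tp \<psi> g \<xi>)"
    proof
      fix \<xi>
      have "fourier \<mu> D \<xi> = fourier \<mu> (\<lambda>\<gamma>. \<psi> \<gamma> * tp F g \<gamma>) \<xi> - fourier \<mu> (\<lambda>_. 1) \<xi>"
        unfolding D_def by (rule fourier_diff) (intro bm_mult \<psi> bm_tp F(1), rule bm_const)
      also have "\<dots> = Tp \<psi> ?x \<xi> - \<delta> \<xi>" by (simp add: Bcoef[OF g F(1)] fourier_one \<delta>_def)
      finally show "fourier \<mu> D \<xi> = Tp \<psi> ?x \<xi> - Tp \<psi> g \<xi>" by (simp add: Tg)
    qed
    have "N2 D \<le> sqn (fourier \<mu> D)" by (rule parseval_le[OF Dbm])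
    also have "\<dots> = sqn (Tp \<psi> (\<lambda>\<eta>. ?x \<eta> - g \<eta>))" unfolding Dc Tp_diff[OF \<psi> xi gi] ..
    also have "\<dots> \<le> Cp\<^sup>2 * sqn (\<lambda>\<eta>. ?x \<eta> - g \<eta>)" using T\<psi>[of "\<lambda>\<eta>. ?x \<eta> - g \<eta>"] isl2_diff[OF xi gi] by blast
    also have "\<dots> \<le> Cp\<^sup>2 * e" using F(3) sqn_diff_sym[of ?x g] by (simp add: mult_left_mono)
    finally have ND: "N2 D \<le> Cp\<^sup>2 * e" .
    have "N2 (\<lambda>x. h x - tp F g x) \<le> N2 (\<lambda>x. complex_of_real (1 / (1 - c)) * D x)"
    proof (rule N2_mono)
      show "bm (\<lambda>x. h x - tp F g x)" by (intro bm_diff hbm bm_tp F(1))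
      show "bm (\<lambda>x. complex_of_real (1 / (1 - c)) * D x)" by (intro bm_mult bm_const Dbm)
      fix x assume x: "x \<in> space \<mu>"
      have "h x - tp F g x = - (h x * D x)" unfolding h_def D_def using \<psi>nz[OF x]
        by (simp add: field_simps)
      then have "cmod (h x - tp F g x) = cmod (h x) * cmod (D x)" by (simp add: norm_mult)
      also have "\<dots> \<le> 1 / (1 - c) * cmod (D x)" by (rule mult_right_mono[OF hb[OF x]]) simp
      also have "\<dots> = cmod (complex_of_real (1 / (1 - c)) * D x)"
        unfolding norm_mult norm_of_real using c by simp
      finally show "cmod (h x - tp F g x) \<le> cmod (complex_of_real (1 / (1 - c)) * D x)" .
    qed
    also have "\<dots> = (1 / (1 - c))\<^sup>2 * N2 D" unfolding N2_scale norm_of_real using c by simp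
    also have "\<dots> \<le> (1 / (1 - c))\<^sup>2 * (Cp\<^sup>2 * e)" using ND by (simp add: mult_left_mono)
    finally have N3: "N2 (\<lambda>x. h x - tp F g x) \<le> (Cp / (1 - c))\<^sup>2 * e" by (simp add: power_divide)
    have "fourier \<mu> h \<zeta> = fourier \<mu> (\<lambda>x. h x - tp F g x) \<zeta> + fourier \<mu> (tp F g) \<zeta>"
      using fourier_diff[where \<xi>=\<zeta>, OF hbm bm_tp[OF F(1)]] by simp
    also have "fourier \<mu> (tp F g) \<zeta> = 0" using fourier_tp[OF F(1)] g \<zeta> unfolding l2_iff by simp
    finally have "cmod (fourier \<mu> h \<zeta>) \<le> sqrt (N2 (\<lambda>x. h x - tp F g x))"
      using fourier_bound[OF bm_diff[OF hbm bm_tp[OF F(1)]]] by simp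
    also have "\<dots> \<le> sqrt ((Cp / (1 - c))\<^sup>2 * e)" using N3 by (rule real_sqrt_le_mono)
    also have "\<dots> = Cp / (1 - c) * sqrt e" using Cp(1) c by (simp add: real_sqrt_mult)
    finally show ?thesis .
  qed
  from small_zero[OF K0 this] show "fourier \<mu> (\<lambda>x. 1 / \<psi> x) \<zeta> = 0" unfolding h_def by simp
qed

end


theorem mainTheorem9:
  fixes k :: "'x::linordered_ab_group_add \<Rightarrow> complex"
    and \<mu> :: "('x \<Rightarrow> complex) measure"
    and kc \<psi> :: "('x \<Rightarrow> complex) \<Rightarrow> complex"
  assumes "haar \<mu>"
    and "k \<in> l2 UNIV"
    and "is_check \<mu> k kc"
    and "ess_bounded \<mu> kc"
    and "AE x in \<mu>. cmod (kc x) = 1"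
    and "bij_betw (wiener_hopf k) (l2 pos_cone) (l2 pos_cone)"
    and "\<psi> \<in> Hinf \<mu>"
    and "\<exists>c<1. AE x in \<mu>. cmod (kc x - cnj (\<psi> x)) \<le> c"
  shows "\<exists>\<phi> \<in> Hinf \<mu>. AE x in \<mu>. \<psi> x * \<phi> x = 1"
proof -
  interpret haarG \<mu> by unfold_locales (rule assms(1))
  note chk = assms(3)
  have kl2: "isl2 k" using assms(2) unfolding l2_iff by blast
  have inj: "inj_on (wiener_hopf k) (l2 pos_cone)" using assms(6) by (rule bij_betw_imp_inj_on)
  have kcm: "kc \<in> borel_measurable \<mu>" using assms(4) unfolding ess_bounded_def by blast
  obtain c where c: "c < 1" "AE x in \<mu>. cmod (kc x - cnj (\<psi> x)) \<le> c" using assms(8) by blast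
  define c0 where "c0 = max c 0"
  have c0: "0 \<le> c0" "c0 < 1" using c(1) unfolding c0_def by auto
  have c0ae: "AE x in \<mu>. cmod (kc x - cnj (\<psi> x)) \<le> c0" using c(2) unfolding c0_def
    by eventually_elim auto
  have \<psi>m: "\<psi> \<in> borel_measurable \<mu>" and \<psi>pos: "\<And>\<zeta>. \<zeta> \<notin> pos_cone \<Longrightarrow> fourier \<mu> \<psi> \<zeta> = 0"
    using assms(7) unfolding Hinf_def ess_bounded_def by auto
  obtain C\<psi> where C\<psi>: "AE x in \<mu>. cmod (\<psi> x) \<le> C\<psi>"
    using assms(7) unfolding Hinf_def ess_bounded_def by blast
  define kc' where "kc' x = (if cmod (kc x) = 1 then kc x else 1)" for x
  have kc'm: "kc' \<in> borel_measurable \<mu>" unfolding kc'_def using kcm by measurable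
  have kcu: "cmod (kc' x) = 1" for x unfolding kc'_def by auto
  have kc'bm: "bm kc'" unfolding bm_def using kc'm kcu by (auto intro!: exI[of _ 1])
  have kcae: "AE x in \<mu>. kc x = kc' x" using assms(5) unfolding kc'_def by eventually_elim auto
  define \<psi>' where "\<psi>' x = (if cmod (\<psi> x) \<le> C\<psi> \<and> cmod (kc' x - cnj (\<psi> x)) \<le> c0 then \<psi> x else cnj (kc' x))"
    for x
  have \<psi>'m: "\<psi>' \<in> borel_measurable \<mu>" unfolding \<psi>'_def using \<psi>m kc'm by measurable
  have \<psi>'b: "cmod (\<psi>' x) \<le> max C\<psi> 1" for x unfolding \<psi>'_def using kcu[of x] by auto
  have \<psi>'bm: "bm \<psi>'" unfolding bm_def using \<psi>'m \<psi>'b by blast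
  have \<psi>ae: "AE x in \<mu>. \<psi> x = \<psi>' x" using C\<psi> c0ae kcae unfolding \<psi>'_def by eventually_elim auto
  have \<psi>'c: "cmod (kc' x - cnj (\<psi>' x)) \<le> c0" for x unfolding \<psi>'_def using c0 by auto
  have \<psi>'pos: "fourier \<mu> \<psi>' \<zeta> = 0" if "\<zeta> \<notin> pos_cone" for \<zeta>
  proof -
    have "fourier \<mu> \<psi>' \<zeta> = fourier \<mu> \<psi> \<zeta>"
      unfolding fourier_def using \<psi>ae \<psi>m \<psi>'m by (intro integral_cong_AE) (auto elim: AE_mp)
    then show ?thesis using \<psi>pos[OF that] by simp
  qed
  have main: "fourier \<mu> (\<lambda>x. 1 / \<psi>' x) \<zeta> = 0" if "\<zeta> \<notin> pos_cone" for \<zeta>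
    by (rule core[OF chk kc'bm kcae kcu kl2 inj \<psi>'bm \<psi>'pos c0 \<psi>'c that])
  have \<psi>'low: "1 - c0 \<le> cmod (\<psi>' x)" for x
  proof -
    have "cmod (kc' x) \<le> cmod (kc' x - cnj (\<psi>' x)) + cmod (cnj (\<psi>' x))"
      using norm_triangle_sub[of "kc' x" "cnj (\<psi>' x)"] by (simp add: add.commute)
    then show ?thesis using kcu[of x] \<psi>'c[of x] by simp
  qed
  define \<phi> where "\<phi> x = 1 / \<psi>' x" for x
  have "\<phi> \<in> Hinf \<mu>"
    unfolding Hinf_def ess_bounded_def
  proof (intro CollectI conjI allI impI)
    show "\<phi> \<in> borel_measurable \<mu>" unfolding \<phi>_def using \<psi>'m by measurable
    show "\<exists>C. AE x in \<mu>. cmod (\<phi> x) \<le> C"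
    proof (intro exI AE_I2)
      fix x show "cmod (\<phi> x) \<le> 1 / (1 - c0)"
        unfolding \<phi>_def using \<psi>'low[of x] c0 by (simp add: norm_divide frac_le)
    qed
    fix \<gamma> :: 'x assume "\<gamma> \<notin> pos_cone"
    then show "fourier \<mu> \<phi> \<gamma> = 0" unfolding \<phi>_def by (rule main)
  qed
  moreover have "AE x in \<mu>. \<psi> x * \<phi> x = 1"
    using \<psi>ae
  proof eventually_elim
    case (elim x)
    have "\<psi>' x \<noteq> 0" using \<psi>'low[of x] c0 by auto
    then show ?case using elim unfolding \<phi>_def by simp
  qed
  ultimately show ?thesis by blast
qed


end
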